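(* Consider the algorithm AOA described in the context, under assumptions (A1)–(A3) for all rounds. For any interval $J=[i,j]\in\mathcal{I}$ and any comparators $\mathbf{u}_i,\ldots,\mathbf{u}_{j+1}\in\Omega$, \[ \sum_{t=i}^j f_t(\mathbf{w}_t)-\sum_{t=i}^j f_t(\mathbf{u}_t)\le\sqrt{3|J|c'(j)}+\frac{3G}{4}\sqrt{2|J|(7D^2+4DP_J)}+\frac{\sqrt{2|J|}}{4}\big[1+2\ln(k_J+1)\big], \] where $P_J=\sum_{t=i}^j\|\mathbf{u}_{t+1}-\mathbf{u}_t\|_2$, $k_J=\big\lfloor\tfrac12\log_2(1+\tfrac{4P_J}{7D})\big\rfloor+1$, and $c'(j)=1+\ln j+\ln(1+\log_2 j)+\ln\frac{5+3\ln(1+j)}{2}$.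
   Context: Online convex optimization: $\Omega\subseteq\mathbb{R}^d$ convex; in round $t=1,2,\ldots$ the learner plays $\mathbf{w}_t\in\Omega$, then a convex $f_t:\Omega\to\mathbb{R}$ is revealed. Assumptions: (A1) $\|\nabla f_t(\mathbf{w})\|_2\le G$ for all $\mathbf{w}\in\Omega$, $t$; (A2) $\mathbf{0}\in\Omega$ and the diameter of $\Omega$ is at most $D$; (A3) $0\le f_t\le1$ on $\Omega$. $\Pi_\Omega$ is Euclidean projection; online gradient descent (OGD) with step $\eta$ updates $\mathbf{v}\mapsto\Pi_\Omega[\mathbf{v}-\eta\nabla f_t(\mathbf{v})]$. Geometric covering intervals: $\mathcal{I}=\bigcup_{k\ge0}\mathcal{I}_k$, $\mathcal{I}_k=\{[i2^k,(i+1)2^k-1]: i=1,2,\ldots\}$. Ader with input length $L$: $N=\lceil\frac12\log_2(1+4L/7)\rceil+1$, step sizes $\eta_i=\frac{2^{i-1}D}{G}\sqrt{\frac7{2L}}$, $i=1,\ldots,N$, one OGD instance (arbitrary initial point) per $\eta_i$, initial weights $p_{1,\eta_i}=\frac{C}{i(i+1)}$ with $C=1+\frac1N$, play $\sum_ip_{t,\eta_i}\mathbf{w}_{t,\eta_i}$, update $p_{t+1,\eta}\propto p_{t,\eta}e^{-\alpha f_t(\mathbf{w}_{t,\eta})}$ (normalized) with $\alpha=\sqrt{8/L}$. Algorithm AOA: for each $J\in\mathcal{I}$ an expert $E_J$ runs Ader with input $|J|$ over rounds $t\in J$, producing $\mathbf{w}_{t,J}$; active experts $\mathcal{A}_t=\{E_J:J\in\mathcal{I},t\in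 J\}$. Combination by AdaNormalHedge: $\Phi(R,C)=\exp([R]_+^2/(3C))$, $\Phi(0,0)=1$, $w(R,C)=\tfrac12(\Phi(R+1,C+1)-\Phi(R-1,C+1))$, $R_{t-1,J}=\sum_{u=\min J}^{t-1}(f_u(\mathbf{w}_u)-f_u(\mathbf{w}_{u,J}))$, $C_{t-1,J}=\sum_{u=\min J}^{t-1}|f_u(\mathbf{w}_u)-f_u(\mathbf{w}_{u,J})|$, $p_{t,J}=w(R_{t-1,J},C_{t-1,J})/\sum_{E_{J'}\in\mathcal{A}_t}w(R_{t-1,J'},C_{t-1,J'})$, $\mathbf{w}_t=\sum_{E_J\in\mathcal{A}_t}p_{t,J}\mathbf{w}_{t,J}$. *)

theory Defs
  imports "HOL-Analysis.Analysis"
begin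

definition anh_Phi :: "real \<Rightarrow> real \<Rightarrow> real" where
  "anh_Phi R C = (if R = 0 \<and> C = 0 then 1 else exp ((max R 0)\<^sup>2 / (3 * C)))"

definition anh_w :: "real \<Rightarrow> real \<Rightarrow> real" where
  "anh_w R C = (anh_Phi (R + 1) (C + 1) - anh_Phi (R - 1) (C + 1)) / 2"

definition int_start :: "nat \<times> nat \<Rightarrow> nat" where
  "int_start J = snd J * 2 ^ fst J"

definition int_end :: "nat \<times> nat \<Rightarrow> nat" where
  "int_end J = (snd J + 1) * 2 ^ fst J - 1"

definition int_len :: "nat \<times> nat \<Rightarrow> nat" where
  "int_len J = 2 ^ fst J"

definition covering :: "(nat \<times> nat) set" where
  "covering = {(k, i). i \<ge> 1}"

definition active :: "nat \<Rightarrow> (nat \<times> nat) set" where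
  "active t = {J \<in> covering. int_start J \<le> t \<and> t \<le> int_end J}"

text \<open>ogd Om g eta x0 s n is the point played by OGD at round s + n when started at
  round s at the point x0; g is the gradient oracle.\<close>

fun ogd :: "'a::euclidean_space set \<Rightarrow> (nat \<Rightarrow> 'a \<Rightarrow> 'a) \<Rightarrow> real \<Rightarrow> 'a \<Rightarrow> nat \<Rightarrow> nat \<Rightarrow> 'a" where
  "ogd Om g eta x0 s 0 = x0"
| "ogd Om g eta x0 s (Suc n) =
     closest_point Om (ogd Om g eta x0 s n - eta *\<^sub>R g (s + n) (ogd Om g eta x0 s n))"

definition ader_N :: "real \<Rightarrow> nat" where
  "ader_N L = nat \<lceil>log 2 (1 + 4 * L / 7) / 2\<rceil> + 1"

definition ader_eta :: "real \<Rightarrow> real \<Rightarrow> real \<Rightarrow> nat \<Rightarrow> real" where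
  "ader_eta D G L m = 2 ^ (m - 1) * D / G * sqrt (7 / (2 * L))"

definition ader_alpha :: "real \<Rightarrow> real" where
  "ader_alpha L = sqrt (8 / L)"

text \<open>Weight of the m-th OGD instance (m = 1..N) at local round n (round s + n),
  for Ader with input length L started at round s with initial points x0 m.\<close>

fun ader_p :: "'a::euclidean_space set \<Rightarrow> (nat \<Rightarrow> 'a \<Rightarrow> 'a) \<Rightarrow> (nat \<Rightarrow> 'a \<Rightarrow> real)
    \<Rightarrow> real \<Rightarrow> real \<Rightarrow> real \<Rightarrow> (nat \<Rightarrow> 'a) \<Rightarrow> nat \<Rightarrow> nat \<Rightarrow> nat \<Rightarrow> real" where
  "ader_p Om g f D G L x0 s 0 m =
     (1 + 1 / real (ader_N L)) / (real m * (real m + 1))"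
| "ader_p Om g f D G L x0 s (Suc n) m =
     (let e = (\<lambda>m'. ader_p Om g f D G L x0 s n m' *
                 exp (- ader_alpha L * f (s + n) (ogd Om g (ader_eta D G L m') (x0 m') s n)))
      in e m / (\<Sum>m'=1..ader_N L. e m'))"

definition ader_out :: "'a::euclidean_space set \<Rightarrow> (nat \<Rightarrow> 'a \<Rightarrow> 'a) \<Rightarrow> (nat \<Rightarrow> 'a \<Rightarrow> real)
    \<Rightarrow> real \<Rightarrow> real \<Rightarrow> real \<Rightarrow> (nat \<Rightarrow> 'a) \<Rightarrow> nat \<Rightarrow> nat \<Rightarrow> 'a" where
  "ader_out Om g f D G L x0 s n =
     (\<Sum>m=1..ader_N L. ader_p Om g f D G L x0 s n m *\<^sub>R ogd Om g (ader_eta D G L m) (x0 m) s n)"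

text \<open>Expert E_J: Ader with input |J| run over the rounds of J; X0 J m is the
  (arbitrary) initial point of its m-th OGD instance.  Output at round t in J.\<close>

definition expert_out :: "'a::euclidean_space set \<Rightarrow> (nat \<Rightarrow> 'a \<Rightarrow> 'a) \<Rightarrow> (nat \<Rightarrow> 'a \<Rightarrow> real)
    \<Rightarrow> real \<Rightarrow> real \<Rightarrow> (nat \<times> nat \<Rightarrow> nat \<Rightarrow> 'a) \<Rightarrow> nat \<Rightarrow> nat \<times> nat \<Rightarrow> 'a" where
  "expert_out Om g f D G X0 t J =
     ader_out Om g f D G (real (int_len J)) (X0 J) (int_start J) (t - int_start J)"

text \<open>E t J is the output of expert J at round t; w u is the learner's play at round u < t.\<close>

definition aoa_R :: "(nat \<Rightarrow> 'a \<Rightarrow> real) \<Rightarrow> (nat \<Rightarrow> nat \<times> nat \<Rightarrow> 'a) \<Rightarrow> (nat \<Rightarrow> 'a)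
    \<Rightarrow> nat \<Rightarrow> nat \<times> nat \<Rightarrow> real" where
  "aoa_R f E w t J = (\<Sum>u\<in>{int_start J..<t}. f u (w u) - f u (E u J))"

definition aoa_C :: "(nat \<Rightarrow> 'a \<Rightarrow> real) \<Rightarrow> (nat \<Rightarrow> nat \<times> nat \<Rightarrow> 'a) \<Rightarrow> (nat \<Rightarrow> 'a)
    \<Rightarrow> nat \<Rightarrow> nat \<times> nat \<Rightarrow> real" where
  "aoa_C f E w t J = (\<Sum>u\<in>{int_start J..<t}. \<bar>f u (w u) - f u (E u J)\<bar>)"

definition aoa_play :: "(nat \<Rightarrow> 'a::real_vector \<Rightarrow> real) \<Rightarrow> (nat \<Rightarrow> nat \<times> nat \<Rightarrow> 'a) \<Rightarrow> (nat \<Rightarrow> 'a)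
    \<Rightarrow> nat \<Rightarrow> 'a" where
  "aoa_play f E w t =
     (let wt = (\<lambda>J. anh_w (aoa_R f E w t J) (aoa_C f E w t J));
          Z = (\<Sum>J\<in>active t. wt J)
      in (\<Sum>J\<in>active t. (wt J / Z) *\<^sub>R E t J))"

text \<open>aoa_hist f E n = [w_1, ..., w_n].\<close>

fun aoa_hist :: "(nat \<Rightarrow> 'a::real_vector \<Rightarrow> real) \<Rightarrow> (nat \<Rightarrow> nat \<times> nat \<Rightarrow> 'a) \<Rightarrow> nat \<Rightarrow> 'a list" where
  "aoa_hist f E 0 = []"
| "aoa_hist f E (Suc n) =
     (let h = aoa_hist f E n in h @ [aoa_play f E (\<lambda>u. h ! (u - 1)) (Suc n)])"

definition aoa :: "'a::euclidean_space set \<Rightarrow> (nat \<Rightarrow> 'a \<Rightarrow> 'a) \<Rightarrow> (nat \<Rightarrow> 'a \<Rightarrow> real)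
    \<Rightarrow> real \<Rightarrow> real \<Rightarrow> (nat \<times> nat \<Rightarrow> nat \<Rightarrow> 'a) \<Rightarrow> nat \<Rightarrow> 'a" where
  "aoa Om g f D G X0 t = aoa_hist f (expert_out Om g f D G X0) t ! (t - 1)"

end

theory Submission
  imports Defs "HOL-Probability.Hoeffding"
begin

lemma anh_Phi_eq: "anh_Phi R C = exp ((max R 0)\<^sup>2 / (3 * C))"
  by (auto simp: anh_Phi_def)

lemma cosh_le_exp_sq: "cosh (y::real) \<le> exp (y\<^sup>2 / 2)"
proof -
  have "-(\<bar>2*y\<bar>) * (1/2) + ln (1 + (1/2) * (exp \<bar>2*y\<bar> - 1)) \<le> \<bar>2*y\<bar>\<^sup>2 / 8"
    by (rule Hoeffdings_lemma_aux) auto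
  moreover have "1 + (1/2) * (exp \<bar>2*y\<bar> - 1) = exp \<bar>y\<bar> * cosh y"
    by (cases "y \<ge> 0") (auto simp: cosh_def field_simps simp flip: exp_add exp_diff)
  moreover have "exp \<bar>y\<bar> * cosh y > 0" by (simp add: cosh_real_pos)
  ultimately have "-\<bar>y\<bar> + (\<bar>y\<bar> + ln (cosh y)) \<le> y\<^sup>2/2"
    by (simp add: ln_mult cosh_real_pos power2_eq_square)
  hence "ln (cosh y) \<le> y\<^sup>2/2" by simp
  thus ?thesis by (metis cosh_real_pos exp_le_cancel_iff exp_ln)
qed


lemma sedrakyan:
  fixes x y p q :: real
  assumes "p > 0" "q > 0"
  shows "(x + y)\<^sup>2 / (p + q) \<le> x\<^sup>2 / p + y\<^sup>2 / q"
proof -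
  have "0 \<le> (x*q - y*p)\<^sup>2" by simp
  hence "(x + y)\<^sup>2 * (p*q) \<le> (x\<^sup>2 * q + y\<^sup>2 * p) * (p + q)"
    by (simp add: power2_eq_square algebra_simps)
  thus ?thesis using assms by (simp add: field_simps)
qed

lemma sedr2:
  fixes a b C s :: real
  assumes "C \<ge> 0" "a \<ge> 0" "C = 0 \<longrightarrow> a = 0" "0 \<le> s" "s \<le> 1"
  shows "((1-s)*a + s*b)\<^sup>2 / (C + s) \<le> (1-s)*(a\<^sup>2 / C) + s*(b\<^sup>2/(C+1))"
proof -
  consider "s = 0" | "s = 1" | "C = 0" "0 < s" | "C > 0" "0 < s" "s < 1" using assms by linarith
  thus ?thesis
  proof cases
    case 1 thus ?thesis by simp
  next
    case 2 thus ?thesis by (simp add: add.commute)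
  next
    case 3 thus ?thesis using assms by (simp add: power2_eq_square)
  next
    case 4
    have "((1-s)*a + s*b)\<^sup>2 / ((1-s)*C + s*(C+1)) \<le> ((1-s)*a)\<^sup>2/((1-s)*C) + (s*b)\<^sup>2/(s*(C+1))"
      by (rule sedrakyan) (use 4 in auto)
    also have "((1-s)*a)\<^sup>2/((1-s)*C) = (1-s)*(a\<^sup>2 / C)" using 4
      by (simp add: power2_eq_square)
    also have "(s*b)\<^sup>2/(s*(C+1)) = s*(b\<^sup>2/(C+1))" using 4
      by (simp add: power2_eq_square)
    also have "(1-s)*C + s*(C+1) = C + s" by algebra
    finally show ?thesis .
  qed
qed

lemma exp_convex2:
  fixes s X Y :: real
  assumes "0 \<le> s" "s \<le> 1"
  shows "exp ((1-s)*X + s*Y) \<le> (1-s)*exp X + s * exp Y"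
  using convex_onD[OF convex_on_exp[of 1], of s X Y] assms by simp

lemma anh_Phi_ge1: "C \<ge> 0 \<Longrightarrow> anh_Phi R C \<ge> 1"
  by (simp add: anh_Phi_eq)

lemma anh_w_nonneg:
  assumes "C \<ge> 0" shows "anh_w R C \<ge> 0"
proof -
  have "(max (R-1) 0)\<^sup>2 \<le> (max (R+1) 0)\<^sup>2"
    by (intro power_mono) auto
  hence "(max (R-1) 0)\<^sup>2 / (3*(C+1)) \<le> (max (R+1) 0)\<^sup>2 / (3*(C+1))"
    using assms by (intro divide_right_mono) auto
  thus ?thesis by (simp add: anh_w_def anh_Phi_eq)
qed

lemma exp_small_bound:
  fixes a :: real assumes "a \<ge> 1"
  shows "exp (1/(3*a)) \<le> 1 + 3/a"
proof -
  have "1 - 1/(3*a) \<le> exp (-(1/(3*a)))" using exp_ge_add_one_self[of "-(1/(3*a))"] by simp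
  hence "exp (1/(3*a)) * (1 - 1/(3*a)) \<le> exp (1/(3*a)) * exp (-(1/(3*a)))"
    by (intro mult_left_mono) auto
  hence h: "exp (1/(3*a)) * (1 - 1/(3*a)) \<le> 1" by (simp flip: exp_add)
  have "exp (1/(3*a)) \<le> 1 / (1 - 1/(3*a))"
    using h assms by (simp add: field_simps)
  also have "\<dots> \<le> 1 + 3/a" using assms by (simp add: field_simps)
  finally show ?thesis .
qed

lemma exp_one_le4: "exp (1::real) \<le> 4"
proof -
  have "1 - 1/2 \<le> exp (-(1/2::real))" using exp_ge_add_one_self[of "-(1/2)::real"] by simp
  hence "exp (1/2::real) * (1/2) \<le> exp (1/2) * exp (-(1/2::real))"
    by (intro mult_left_mono) auto
  hence "exp (1/2::real) \<le> 2" by (simp flip: exp_add)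
  hence "exp (1/2::real) * exp (1/2) \<le> 2 * 2" by (intro mult_mono) auto
  thus ?thesis by (simp flip: exp_add)
qed


lemma avg_bound:
  fixes R C :: real
  assumes C: "C \<ge> 0" and RC: "\<bar>R\<bar> \<le> C"
  shows "(anh_Phi (R+1) (C+1) + anh_Phi (R-1) (C+1)) / 2 \<le> anh_Phi R C + 3 / (2*(C+1))"
proof (cases "R \<le> 0")
  case True
  have "(max (R+1) 0)\<^sup>2 \<le> 1" using True RC by (auto simp: max_def power_le_one abs_if)
  hence "(max (R+1) 0)\<^sup>2 / (3*(C+1)) \<le> 1 / (3*(C+1))" using C by (intro divide_right_mono) auto
  hence "anh_Phi (R+1) (C+1) \<le> exp (1 / (3*(C+1)))" by (simp add: anh_Phi_eq)
  also have "\<dots> \<le> 1 + 3/(C+1)" using exp_small_bound[of "C+1"] C by simp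
  finally have 1: "anh_Phi (R+1) (C+1) \<le> 1 + 3/(C+1)" .
  have 2: "anh_Phi (R-1) (C+1) = 1" using True by (simp add: anh_Phi_eq max_def)
  have 3: "anh_Phi R C = 1" using True by (simp add: anh_Phi_eq max_def)
  have h: "(3::real)/(2*(C+1)) = (3/(C+1))/2" by simp
  have gen: "\<And>P X::real. P \<le> 1 + X \<Longrightarrow> (P + 1)/2 \<le> 1 + X/2" by auto
  have "(anh_Phi (R+1) (C+1) + anh_Phi (R-1) (C+1)) / 2 \<le> 1 + (3/(C+1))/2"
    unfolding 2 using gen[OF 1] .
  thus ?thesis unfolding 3 h .
next
  case False
  hence R: "R > 0" by simp
  hence Cpos: "C > 0" using RC by simp
  define a where "a = C + 1"
  have a1: "a > 1" using Cpos a_def by simp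
  define q where "q = R\<^sup>2"
  have q0: "q \<ge> 0" by (simp add: q_def)
  define E where "E = (q+1)/(3*a) + 2*q/(9*a\<^sup>2)"
  define F where "F = q/(3*(a-1))"
  have PhiR: "anh_Phi R C = exp F" using R by (simp add: anh_Phi_eq F_def q_def a_def max_def)
  have P1: "anh_Phi (R+1) a = exp ((R+1)\<^sup>2/(3*a))" using R by (simp add: anh_Phi_eq max_def)
  have "(max (R-1) 0)\<^sup>2 \<le> (R-1)\<^sup>2" by (auto simp: max_def)
  hence "(max (R-1) 0)\<^sup>2/(3*a) \<le> (R-1)\<^sup>2/(3*a)" using a1 by (intro divide_right_mono) auto
  hence P2: "anh_Phi (R-1) a \<le> exp ((R-1)\<^sup>2/(3*a))" by (simp add: anh_Phi_eq)
  have "(exp ((R+1)\<^sup>2/(3*a)) + exp ((R-1)\<^sup>2/(3*a)))/2 = exp ((q+1)/(3*a)) * cosh (2*R/(3*a))"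
  proof -
    have e1: "(R+1)\<^sup>2/(3*a) = (q+1)/(3*a) + 2*R/(3*a)" unfolding q_def using a1
      by (simp add: field_simps power2_eq_square)
    have e2: "(R-1)\<^sup>2/(3*a) = (q+1)/(3*a) + -(2*R/(3*a))" unfolding q_def using a1
      by (simp add: field_simps power2_eq_square)
    show ?thesis unfolding e1 e2 exp_add cosh_def by (simp add: field_simps)
  qed
  also have "\<dots> \<le> exp ((q+1)/(3*a)) * exp ((2*R/(3*a))\<^sup>2/2)"
    by (intro mult_left_mono cosh_le_exp_sq) auto
  also have "\<dots> = exp E" unfolding E_def q_def by (simp add: power2_eq_square flip: exp_add)
  finally have LE: "(anh_Phi (R+1) a + anh_Phi (R-1) a)/2 \<le> exp E" using P1 P2 by simp
  have ident: "E - F - 1/(3*a) = - q*(a+2)/(9*a\<^sup>2*(a-1))"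
    unfolding E_def F_def using a1 by (simp add: field_simps power2_eq_square)
  have sgn: "q*(a+2)/(9*a\<^sup>2*(a-1)) \<ge> 0" using a1 q0 by simp
  have EF: "E - F \<le> 1/(3*a)" using ident sgn by linarith
  have "exp E \<le> exp F + 3/(2*a)"
  proof (cases "E \<le> F")
    case True
    have "exp E \<le> exp F" using True by simp
    moreover have "0 \<le> 3 / (2*a)" using a1 by simp
    ultimately show ?thesis by linarith
  next
    case False
    have "q*(a+2)/(9*a\<^sup>2*(a-1)) < 1/(3*a)" using ident False by linarith
    hence "q*(a+2)/(9*a\<^sup>2*(a-1)) * (9*a\<^sup>2*(a-1)) < 1/(3*a) * (9*a\<^sup>2*(a-1))"
      using a1 by (intro mult_strict_right_mono) auto
    moreover have "q*(a+2)/(9*a\<^sup>2*(a-1)) * (9*a\<^sup>2*(a-1)) = q*(a+2)" using a1 by simp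
    moreover have "1/(3*a) * (9*a\<^sup>2*(a-1)) = 3*a*(a-1)" using a1 by (simp add: power2_eq_square)
    ultimately have qlt: "q*(a+2) < 3*a*(a-1)" by simp
    have "q*(a+2)*(3*a+2) < 3*a*(a-1)*(3*a+2)" using qlt a1 by (intro mult_strict_right_mono) auto
    moreover have eqq: "q*(3*a+2)*(a+2) = q*(a+2)*(3*a+2)" by (simp add: algebra_simps)
    ultimately have "q*(3*a+2)*(a+2) < 3*a*(a-1)*(3*a+2)" unfolding eqq by blast
    also have "\<dots> \<le> 3*a*(3*a-1)*(a+2)" using a1 by (simp add: algebra_simps)
    finally have "q*(3*a+2)*(a+2) < 3*a*(3*a-1)*(a+2)" .
    hence "q*(3*a+2) < 3*a*(3*a-1)"
      using mult_less_cancel_right_pos[of "a+2" "q*(3*a+2)" "3*a*(3*a-1)"] a1 by simp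
    moreover have "3*a*(3*a-1) = 9*a\<^sup>2 - 3*a" by (simp add: algebra_simps power2_eq_square)
    ultimately have num: "q*(3*a+2) + 3*a < 9*a\<^sup>2" by linarith
    have Eeq: "E = (q*(3*a+2) + 3*a)/(9*a\<^sup>2)" unfolding E_def using a1
      by (simp add: field_simps power2_eq_square)
    have E1: "E < 1" unfolding Eeq using num a1 by simp
    have h1: "1 + (F - E) \<le> exp (F - E)" by (rule exp_ge_add_one_self)
    have h2: "1 - exp (F - E) \<le> E - F" using h1 by linarith
    have "exp E * exp (F - E) = exp F" by (simp flip: exp_add)
    hence "exp E - exp F = exp E * (1 - exp (F - E))" by (simp add: algebra_simps)
    also have "\<dots> \<le> exp E * (E - F)" using h2 by (intro mult_left_mono) auto
    also have "\<dots> \<le> 4 * (1/(3*a))"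
    proof (intro mult_mono EF)
      show "exp E \<le> 4" using E1 exp_one_le4 by (meson exp_le_cancel_iff less_imp_le order_trans)
    qed (use False in auto)
    also have "\<dots> \<le> 3/(2*a)" using a1 by (simp add: field_simps)
    finally show ?thesis by simp
  qed
  thus ?thesis using LE PhiR a_def by simp
qed


lemma pot_step:
  fixes R C r :: real
  assumes C: "C \<ge> 0" and RC: "\<bar>R\<bar> \<le> C" and r: "\<bar>r\<bar> \<le> 1"
  shows "anh_Phi (R+r) (C+\<bar>r\<bar>) \<le> anh_Phi R C + anh_w R C * r + 3*\<bar>r\<bar>/(2*(C+1))"
proof -
  define s where "s = \<bar>r\<bar>"
  define \<sigma> where "\<sigma> = (if r \<ge> 0 then 1 else -1::real)"
  have s01: "0 \<le> s" "s \<le> 1" using r by (auto simp: s_def)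
  have rs: "r = s * \<sigma>" by (auto simp: s_def \<sigma>_def)
  have Rr: "R + r = (1-s)*R + s*(R+\<sigma>)" using rs by (simp add: algebra_simps)
  define mR where "mR = max R 0"
  define mS where "mS = max (R+\<sigma>) 0"
  have m1: "max (R+r) 0 \<le> (1-s)*mR + s*mS"
  proof -
    have a: "(1-s)*R \<le> (1-s)*mR" using s01 by (intro mult_left_mono) (auto simp: mR_def)
    have b: "s*(R+\<sigma>) \<le> s*mS" using s01 by (intro mult_left_mono) (auto simp: mS_def)
    have c: "0 \<le> (1-s)*mR + s*mS" using s01 by (intro add_nonneg_nonneg mult_nonneg_nonneg) (auto simp: mR_def mS_def)
    show ?thesis unfolding Rr using a b c by simp
  qed
  have "(max (R+r) 0)\<^sup>2 \<le> ((1-s)*mR + s*mS)\<^sup>2"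
    by (intro power_mono m1) auto
  hence "(max (R+r) 0)\<^sup>2 / (3*(C+s)) \<le> ((1-s)*mR + s*mS)\<^sup>2 / (C+s) / 3"
    using C s01 by (simp add: divide_right_mono divide_divide_eq_left mult.commute)
  also have "\<dots> \<le> ((1-s)*(mR\<^sup>2 / C) + s*(mS\<^sup>2/(C+1))) / 3"
    by (intro divide_right_mono sedr2) (use C RC s01 in \<open>auto simp: mR_def\<close>)
  also have "\<dots> = (1-s)*(mR\<^sup>2 / (3*C)) + s*(mS\<^sup>2/(3*(C+1)))"
  proof -
    have g: "\<And>X Y. ((1-s)*X + s*Y)/3 = (1-s)*(X/3) + s*(Y/3)" by (simp add: field_simps)
    have e1: "mR\<^sup>2 / (3*C) = (mR\<^sup>2/C)/3" by simp
    have e2: "mS\<^sup>2 / (3*(C+1)) = (mS\<^sup>2/(C+1))/3" by simp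
    show ?thesis unfolding e1 e2 by (rule g)
  qed
  finally have "exp ((max (R+r) 0)\<^sup>2 / (3*(C+s))) \<le> exp ((1-s)*(mR\<^sup>2 / (3*C)) + s*(mS\<^sup>2/(3*(C+1))))"
    by simp
  also have "\<dots> \<le> (1-s)*anh_Phi R C + s * anh_Phi (R+\<sigma>) (C+1)"
    unfolding anh_Phi_eq mR_def mS_def by (rule exp_convex2) (use s01 in auto)
  finally have L: "anh_Phi (R+r) (C+s) \<le> (1-s)*anh_Phi R C + s * anh_Phi (R+\<sigma>) (C+1)"
    by (simp add: anh_Phi_eq)
  define avg where "avg = (anh_Phi (R+1) (C+1) + anh_Phi (R-1) (C+1)) / 2"
  have Ps: "anh_Phi (R+\<sigma>) (C+1) = avg + \<sigma> * anh_w R C"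
    by (auto simp: \<sigma>_def avg_def anh_w_def field_simps)
  have av: "avg \<le> anh_Phi R C + 3/(2*(C+1))" unfolding avg_def by (rule avg_bound[OF C RC])
  have "(1-s)*anh_Phi R C + s * anh_Phi (R+\<sigma>) (C+1) = anh_Phi R C + anh_w R C * r + s*(avg - anh_Phi R C)"
    unfolding Ps rs by (simp add: algebra_simps)
  also have "\<dots> \<le> anh_Phi R C + anh_w R C * r + s*(3/(2*(C+1)))"
    using av s01 by (intro add_left_mono mult_left_mono) auto
  finally have L2: "(1-s)*anh_Phi R C + s * anh_Phi (R+\<sigma>) (C+1) \<le> anh_Phi R C + anh_w R C * r + s*(3/(2*(C+1)))" .
  have e: "s*(3/(2*(C+1))) = 3*\<bar>r\<bar>/(2*(C+1))" by (simp add: s_def)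
  have "anh_Phi (R+r) (C+s) \<le> anh_Phi R C + anh_w R C * r + 3*\<bar>r\<bar>/(2*(C+1))"
    using L L2 e by linarith
  thus ?thesis by (simp add: s_def)
qed


lemma grad_ineq:
  fixes F :: "'a::euclidean_space \<Rightarrow> real"
  assumes cvx: "convex Om" and cF: "convex_on Om F"
    and der: "(F has_derivative (\<lambda>h. gw \<bullet> h)) (at w within Om)"
    and w: "w \<in> Om" and u: "u \<in> Om"
  shows "F w - F u \<le> gw \<bullet> (w - u)"
proof -
  define d where "d = u - w"
  define l where "l = (\<lambda>t::real. w + t *\<^sub>R d)"
  have l_eq: "l t = (1-t) *\<^sub>R w + t *\<^sub>R u" for t
    by (simp add: l_def d_def algebra_simps)
  have ld: "(l has_derivative (\<lambda>t. t *\<^sub>R d)) (at 0 within {0..1})"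
    unfolding l_def by (auto intro!: derivative_eq_intros)
  have img: "l ` {0..1} \<subseteq> Om"
    using cvx w u by (auto simp: l_eq intro!: convexD_alt)
  have l0: "l 0 = w" by (simp add: l_def)
  have Fd: "(F has_derivative (\<lambda>h. gw \<bullet> h)) (at (l 0) within l ` {0..1})"
    unfolding l0 by (rule has_derivative_subset[OF der img])
  have comp: "((\<lambda>t. F (l t)) has_derivative (\<lambda>t. gw \<bullet> (t *\<^sub>R d))) (at 0 within {0..1})"
    by (rule has_derivative_in_compose[OF ld Fd])
  have "(\<lambda>t. gw \<bullet> (t *\<^sub>R d)) = (*) (gw \<bullet> d)"
    by (auto simp: fun_eq_iff)
  hence "((\<lambda>t. F (l t)) has_field_derivative (gw \<bullet> d)) (at 0 within {0..1})"
    using comp by (simp add: has_field_derivative_def)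
  hence lim: "((\<lambda>y. (F (l y) - F (l 0)) / (y - 0)) \<longlongrightarrow> gw \<bullet> d) (at 0 within {0..1})"
    by (simp add: has_field_derivative_iff)
  have ev: "eventually (\<lambda>y. (F (l y) - F (l 0)) / (y - 0) \<le> F u - F w) (at 0 within {0..1})"
    unfolding eventually_at_filter
  proof (intro always_eventually allI impI)
    fix y :: real assume "y \<noteq> 0" "y \<in> {0..1}"
    hence y: "0 < y" "y \<le> 1" by auto
    have "F (l y) \<le> (1-y) * F w + y * F u"
      unfolding l_eq using cF w u y by (intro convex_onD) auto
    hence "F (l y) - F (l 0) \<le> y * (F u - F w)" using l0 by (simp add: algebra_simps)
    thus "(F (l y) - F (l 0)) / (y - 0) \<le> F u - F w" using y by (simp add: divide_le_eq mult.commute)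
  qed
  have nt: "\<not> trivial_limit (at (0::real) within {0..1})"
    by (simp add: at_within_Icc_at_right)
  have "gw \<bullet> d \<le> F u - F w" by (rule tendsto_upperbound[OF lim ev nt])
  thus ?thesis by (simp add: d_def inner_diff_right)
qed


lemma ogd_in:
  assumes "closed Om" "x0 \<in> Om"
  shows "ogd Om g eta x0 s n \<in> Om"
  using assms by (induction n) (auto intro!: closest_point_in_set)

lemma sq_diff_bound:
  fixes A B :: "'a::real_normed_vector"
  assumes "norm A \<le> D" "norm B \<le> D"
  shows "(norm A)\<^sup>2 - (norm B)\<^sup>2 \<le> 2 * D * norm (A - B)"
proof -
  have "(norm A)\<^sup>2 - (norm B)\<^sup>2 = (norm A - norm B) * (norm A + norm B)"
    by (simp add: power2_eq_square algebra_simps)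
  also have "\<dots> \<le> norm (A - B) * (2 * D)"
  proof (cases "norm A - norm B \<ge> 0")
    case True
    have "norm A - norm B \<le> norm (A - B)" by (rule norm_triangle_ineq2)
    thus ?thesis using True assms by (intro mult_mono) auto
  next
    case False
    hence "(norm A - norm B) * (norm A + norm B) \<le> 0"
      by (intro mult_nonpos_nonneg) auto
    also have "0 \<le> norm (A - B) * (2 * D)"
    proof -
      have "D \<ge> 0" using assms(1) norm_ge_zero[of A] by linarith
      thus ?thesis by simp
    qed
    finally show ?thesis .
  qed
  finally show ?thesis by (simp add: mult.commute mult.left_commute)
qed

lemma ogd_step:
  fixes Om :: "'a::euclidean_space set"
  assumes cvx: "convex Om" and cl: "closed Om" and eta: "eta > 0"
    and cF: "convex_on Om F"
    and der: "\<forall>w\<in>Om. (F has_derivative (\<lambda>h. gg w \<bullet> h)) (at w within Om)"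
    and gG: "\<forall>w\<in>Om. norm (gg w) \<le> G"
    and diam: "\<forall>x\<in>Om. \<forall>y\<in>Om. norm (x - y) \<le> D"
    and a: "a \<in> Om" and v: "v \<in> Om" and v': "v' \<in> Om"
  shows "F a - F v \<le> ((norm (a - v))\<^sup>2 - (norm (closest_point Om (a - eta *\<^sub>R gg a) - v'))\<^sup>2) / (2*eta)
            + D * norm (v' - v) / eta + eta * G\<^sup>2 / 2"
proof -
  define b where "b = closest_point Om (a - eta *\<^sub>R gg a)"
  have ne: "Om \<noteq> {}" using a by auto
  have b: "b \<in> Om" unfolding b_def by (rule closest_point_in_set[OF cl ne])
  have 1: "F a - F v \<le> gg a \<bullet> (a - v)" by (rule grad_ineq[OF cvx cF der[rule_format, OF a] a v])
  have "dist b (closest_point Om v) \<le> dist (a - eta *\<^sub>R gg a) v"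
    unfolding b_def by (rule closest_point_lipschitz[OF cvx cl ne])
  hence "norm (b - v) \<le> norm ((a - v) - eta *\<^sub>R gg a)"
    using closest_point_self[OF v] by (simp add: dist_norm algebra_simps)
  hence "(norm (b - v))\<^sup>2 \<le> (norm ((a - v) - eta *\<^sub>R gg a))\<^sup>2"
    by (intro power_mono) auto
  also have "\<dots> = (norm (a - v))\<^sup>2 - 2 * eta * (gg a \<bullet> (a - v)) + eta\<^sup>2 * (norm (gg a))\<^sup>2"
    apply (simp only: power2_norm_eq_inner inner_diff_left inner_diff_right inner_scaleR_left inner_scaleR_right)
    apply (simp add: inner_commute power2_eq_square algebra_simps)
    done
  finally have 2: "(norm (b - v))\<^sup>2 \<le> (norm (a - v))\<^sup>2 - 2 * eta * (gg a \<bullet> (a - v)) + eta\<^sup>2 * (norm (gg a))\<^sup>2" .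
  have g2: "(norm (gg a))\<^sup>2 \<le> G\<^sup>2" using gG a by (intro power_mono) auto
  have 3: "(norm (b - v'))\<^sup>2 - (norm (b - v))\<^sup>2 \<le> 2 * D * norm (v' - v)"
  proof -
    have "(norm (b - v'))\<^sup>2 - (norm (b - v))\<^sup>2 \<le> 2 * D * norm ((b - v') - (b - v))"
      by (rule sq_diff_bound) (use diam b v v' in auto)
    also have "(b - v') - (b - v) = -(v' - v)" by simp
    finally show ?thesis by (simp add: norm_minus_commute)
  qed
  have "2 * eta * (gg a \<bullet> (a - v)) \<le> (norm (a - v))\<^sup>2 - (norm (b - v'))\<^sup>2 + 2 * D * norm (v' - v) + eta\<^sup>2 * G\<^sup>2"
    using 2 3 mult_left_mono[OF g2, of "eta\<^sup>2"] by simp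
  hence "gg a \<bullet> (a - v) \<le> ((norm (a - v))\<^sup>2 - (norm (b - v'))\<^sup>2 + 2 * D * norm (v' - v) + eta\<^sup>2 * G\<^sup>2) / (2 * eta)"
    using eta by (simp add: field_simps)
  also have "\<dots> = ((norm (a - v))\<^sup>2 - (norm (b - v'))\<^sup>2) / (2*eta) + D * norm (v' - v) / eta + eta * G\<^sup>2 / 2"
    using eta by (simp add: field_simps power2_eq_square)
  finally show ?thesis using 1 unfolding b_def by linarith
qed

lemma ogd_regret:
  fixes Om :: "'a::euclidean_space set" and f :: "nat \<Rightarrow> 'a \<Rightarrow> real"
  assumes cvx: "convex Om" and cl: "closed Om" and eta: "eta > 0" and x0: "x0 \<in> Om"
    and s1: "s \<ge> 1"
    and cF: "\<forall>t\<ge>1. convex_on Om (f t)"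
    and der: "\<forall>t\<ge>1. \<forall>w\<in>Om. (f t has_derivative (\<lambda>h. g t w \<bullet> h)) (at w within Om)"
    and gG: "\<forall>t\<ge>1. \<forall>w\<in>Om. norm (g t w) \<le> G"
    and diam: "\<forall>x\<in>Om. \<forall>y\<in>Om. norm (x - y) \<le> D"
    and D0: "D \<ge> 0"
    and u: "\<forall>n\<le>L. u (s + n) \<in> Om"
  shows "(\<Sum>n<L. f (s+n) (ogd Om g eta x0 s n) - f (s+n) (u (s+n)))
          \<le> (D\<^sup>2 + 2 * D * (\<Sum>n<L. norm (u (s+n+1) - u (s+n)))) / (2*eta) + eta * G\<^sup>2 * real L / 2"
proof -
  define x where "x = ogd Om g eta x0 s"
  define Dn where "Dn = (\<lambda>n. (norm (x n - u (s+n)))\<^sup>2)"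
  have xin: "x n \<in> Om" for n unfolding x_def by (rule ogd_in[OF cl x0])
  have step: "f (s+n) (x n) - f (s+n) (u (s+n)) \<le> (Dn n - Dn (Suc n)) / (2*eta)
        + D * norm (u (s+n+1) - u (s+n)) / eta + eta * G\<^sup>2 / 2" if n: "n < L" for n
  proof -
    have t1: "s + n \<ge> 1" using s1 by simp
    have "x (Suc n) = closest_point Om (x n - eta *\<^sub>R g (s+n) (x n))" by (simp add: x_def)
    moreover have "u (s + Suc n) = u (s+n+1)" by simp
    moreover have dt: "\<forall>w\<in>Om. (f (s+n) has_derivative (\<lambda>h. g (s+n) w \<bullet> h)) (at w within Om)"
      using der t1 by blast
    moreover have gt: "\<forall>w\<in>Om. norm (g (s+n) w) \<le> G" using gG t1 by blast
    moreover have ct: "convex_on Om (f (s+n))" using cF t1 by blast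
    moreover have "u (s+n) \<in> Om" using u n by auto
    moreover have "u (s+(n+1)) \<in> Om" using u n by (metis Suc_eq_plus1 Suc_leI)
    ultimately show ?thesis unfolding Dn_def
      using ogd_step[OF cvx cl eta ct dt gt diam xin[of n], of "u (s+n)" "u (s+n+1)"] by (simp add: add.assoc)
  qed
  have "(\<Sum>n<L. f (s+n) (x n) - f (s+n) (u (s+n)))
       \<le> (\<Sum>n<L. (Dn n - Dn (Suc n)) / (2*eta) + D * norm (u (s+n+1) - u (s+n)) / eta + eta * G\<^sup>2 / 2)"
    by (intro sum_mono step) auto
  also have "\<dots> = (Dn 0 - Dn L) / (2*eta) + D * (\<Sum>n<L. norm (u (s+n+1) - u (s+n))) / eta + eta * G\<^sup>2 * real L / 2"
    by (simp add: sum.distrib sum_lessThan_telescope' flip: sum_divide_distrib sum_distrib_left)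
  also have "\<dots> \<le> (D\<^sup>2 + 2 * D * (\<Sum>n<L. norm (u (s+n+1) - u (s+n)))) / (2*eta) + eta * G\<^sup>2 * real L / 2"
  proof -
    have "Dn 0 \<le> D\<^sup>2" unfolding Dn_def using diam xin[of 0] u by (intro power_mono) auto
    moreover have "Dn L \<ge> 0" by (simp add: Dn_def)
    ultimately have "(Dn 0 - Dn L) / (2*eta) \<le> D\<^sup>2 / (2*eta)" using eta by (intro divide_right_mono) auto
    thus ?thesis using eta by (simp add: add_divide_distrib)
  qed
  finally show ?thesis unfolding x_def .
qed


lemma sum_inv_mm1: "(\<Sum>m=1..N. 1 / (real m * (real m + 1))) = real N / (real N + 1)"
proof (induction N)
  case 0 thus ?case by simp
next
  case (Suc N)
  have "(\<Sum>m=1..Suc N. 1 / (real m * (real m + 1))) = real N / (real N + 1) + 1 / ((real N + 1) * (real N + 2))"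
    using Suc by (simp add: add.commute)
  also have "\<dots> = real (Suc N) / (real (Suc N) + 1)"
  proof -
    have a: "real N + 1 > 0" "real N + 2 > 0" by auto
    have "real N / (real N + 1) = real N * (real N + 2) / ((real N + 1) * (real N + 2))"
      using a by simp
    hence "real N / (real N + 1) + 1 / ((real N + 1) * (real N + 2)) = (real N * (real N + 2) + 1) / ((real N + 1) * (real N + 2))"
      by (simp only: add_divide_distrib)
    also have "real N * (real N + 2) + 1 = (real N + 1) * (real N + 1)" by (simp add: algebra_simps)
    also have "(real N + 1) * (real N + 1) / ((real N + 1) * (real N + 2)) = (real N + 1) / (real N + 2)"
      using a by simp
    finally show ?thesis by (simp add: add.commute)
  qed
  finally show ?case .
qed

lemma ader_N_ge1: "ader_N L \<ge> 1" by (simp add: ader_N_def)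

lemma ader_p_dist:
  "(\<forall>m\<in>{1..ader_N L}. ader_p Om g f D G L x0 s n m > 0) \<and> (\<Sum>m=1..ader_N L. ader_p Om g f D G L x0 s n m) = 1"
proof (induction n)
  case 0
  define N where "N = ader_N L"
  have N1: "N \<ge> 1" using ader_N_ge1 by (simp add: N_def)
  have pos: "\<forall>m\<in>{1..N}. ader_p Om g f D G L x0 s 0 m > 0"
    using N1 by (auto simp: N_def intro!: divide_pos_pos add_pos_pos)
  have "(\<Sum>m=1..N. ader_p Om g f D G L x0 s 0 m) = (1 + 1 / real N) * (\<Sum>m=1..N. 1 / (real m * (real m + 1)))"
    by (simp add: N_def sum_distrib_left)
  also have "\<dots> = (1 + 1 / real N) * (real N / (real N + 1))" by (simp only: sum_inv_mm1)
  also have "\<dots> = 1"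
  proof -
    have Np: "real N > 0" using N1 by simp
    have "1 + 1 / real N = (real N + 1) / real N" using Np by (simp add: field_simps)
    thus ?thesis using Np by simp
  qed
  finally show ?case using pos by (simp add: N_def)
next
  case (Suc n)
  define N where "N = ader_N L"
  define e where "e = (\<lambda>m'. ader_p Om g f D G L x0 s n m' *
                 exp (- ader_alpha L * f (s + n) (ogd Om g (ader_eta D G L m') (x0 m') s n)))"
  have N1: "N \<ge> 1" using ader_N_ge1 by (simp add: N_def)
  have epos: "\<forall>m\<in>{1..N}. e m > 0" using Suc by (simp add: e_def N_def)
  have Spos: "(\<Sum>m=1..N. e m) > 0" using epos N1 by (intro sum_pos) auto
  have peq: "ader_p Om g f D G L x0 s (Suc n) m = e m / (\<Sum>m=1..N. e m)" for m
    by (simp add: e_def N_def Let_def)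
  have "(\<Sum>m=1..N. ader_p Om g f D G L x0 s (Suc n) m) = (\<Sum>m=1..N. e m) / (\<Sum>m=1..N. e m)"
    unfolding peq by (simp only: sum_divide_distrib)
  also have "\<dots> = 1" using Spos by simp
  finally show ?case using epos Spos unfolding peq N_def by auto
qed

lemma hoeffding_step:
  fixes p l :: "nat \<Rightarrow> real" and S :: "nat set"
  assumes fin: "finite S" and p: "\<forall>m\<in>S. p m \<ge> 0" and ps: "(\<Sum>m\<in>S. p m) = 1"
    and l: "\<forall>m\<in>S. 0 \<le> l m \<and> l m \<le> 1" and al: "alpha \<ge> 0"
  shows "ln (\<Sum>m\<in>S. p m * exp (- alpha * l m)) \<le> - alpha * (\<Sum>m\<in>S. p m * l m) + alpha\<^sup>2 / 8"
proof -
  define mu where "mu = (\<Sum>m\<in>S. p m * l m)"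
  have mu0: "mu \<ge> 0" unfolding mu_def using p l by (intro sum_nonneg) auto
  have mu1: "mu \<le> 1"
  proof -
    have "mu \<le> (\<Sum>m\<in>S. p m)" unfolding mu_def using p l
      by (intro sum_mono) (auto intro: mult_right_le_one_le)
    thus ?thesis using ps by simp
  qed
  have pt: "exp (- alpha * l m) \<le> (1 - l m) + l m * exp (- alpha)" if "m \<in> S" for m
  proof -
    have "exp ((1 - l m) * 0 + l m * (- alpha)) \<le> (1 - l m) * exp 0 + l m * exp (- alpha)"
      using exp_convex2[of "l m" 0 "- alpha"] l that by simp
    thus ?thesis by (simp add: mult.commute)
  qed
  have "(\<Sum>m\<in>S. p m * exp (- alpha * l m)) \<le> (\<Sum>m\<in>S. p m * ((1 - l m) + l m * exp (- alpha)))"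
    using p pt by (intro sum_mono mult_left_mono) auto
  also have "\<dots> = 1 - mu + mu * exp (- alpha)"
  proof -
    have eq: "\<And>m. p m * ((1 - l m) + l m * exp (- alpha)) = (p m - p m * l m) + exp (- alpha) * (p m * l m)"
      by (simp add: algebra_simps)
    have "(\<Sum>m\<in>S. p m * ((1 - l m) + l m * exp (- alpha))) = (\<Sum>m\<in>S. (p m - p m * l m) + exp (- alpha) * (p m * l m))"
      by (simp only: eq)
    also have "\<dots> = ((\<Sum>m\<in>S. p m) - (\<Sum>m\<in>S. p m * l m)) + exp (- alpha) * (\<Sum>m\<in>S. p m * l m)"
      by (simp only: sum.distrib sum_subtractf sum_distrib_left)
    finally show ?thesis unfolding mu_def ps by (simp add: mult.commute)
  qed
  also have "\<dots> = exp (- alpha) * (1 + (1 - mu) * (exp alpha - 1))"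
    by (simp add: algebra_simps exp_minus field_simps)
  finally have le: "(\<Sum>m\<in>S. p m * exp (- alpha * l m)) \<le> exp (- alpha) * (1 + (1 - mu) * (exp alpha - 1))" .
  have pos2: "1 + (1 - mu) * (exp alpha - 1) > 0"
    using mu1 al by (intro add_pos_nonneg) auto
  have Spos: "(\<Sum>m\<in>S. p m * exp (- alpha * l m)) > 0"
  proof -
    have "(\<Sum>m\<in>S. p m * exp (- alpha * l m)) \<ge> (\<Sum>m\<in>S. p m * exp (- alpha))"
      using p l al by (intro sum_mono mult_left_mono) (auto simp: mult_left_le)
    also have "(\<Sum>m\<in>S. p m * exp (- alpha)) = exp (- alpha)" using ps by (simp flip: sum_distrib_right)
    finally show ?thesis by (smt (verit) exp_gt_zero)
  qed
  have "ln (\<Sum>m\<in>S. p m * exp (- alpha * l m)) \<le> ln (exp (- alpha) * (1 + (1 - mu) * (exp alpha - 1)))"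
    using le Spos by simp
  also have "\<dots> = - alpha + ln (1 + (1 - mu) * (exp alpha - 1))"
    using pos2 by (simp add: ln_mult)
  also have "\<dots> \<le> - alpha + (alpha * (1 - mu) + alpha\<^sup>2 / 8)"
    using Hoeffdings_lemma_aux[of alpha "1 - mu"] al mu1 by simp
  also have "\<dots> = - alpha * mu + alpha\<^sup>2 / 8" by (simp add: algebra_simps)
  finally show ?thesis unfolding mu_def .
qed


lemma ader_out_in:
  assumes cvx: "convex Om" and cl: "closed Om" and x0: "\<forall>m. x0 m \<in> Om"
  shows "ader_out Om g f D G L x0 s n \<in> Om"
  unfolding ader_out_def
proof (rule convex_sum[OF _ cvx])
  show "(\<Sum>m = 1..ader_N L. ader_p Om g f D G L x0 s n m) = 1" using ader_p_dist by blast
  show "\<And>i. i \<in> {1..ader_N L} \<Longrightarrow> 0 \<le> ader_p Om g f D G L x0 s n i"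
    using ader_p_dist by (meson less_imp_le)
  show "\<And>i. i \<in> {1..ader_N L} \<Longrightarrow> ogd Om g (ader_eta D G L i) (x0 i) s n \<in> Om"
    using ogd_in[OF cl] x0 by blast
qed simp

lemma ader_jensen:
  assumes cvx: "convex Om" and cl: "closed Om" and x0: "\<forall>m. x0 m \<in> Om"
    and cF: "convex_on Om F"
  shows "F (ader_out Om g f D G L x0 s n) \<le>
     (\<Sum>m=1..ader_N L. ader_p Om g f D G L x0 s n m * F (ogd Om g (ader_eta D G L m) (x0 m) s n))"
  unfolding ader_out_def
proof (rule convex_on_sum[OF _ _ cF])
  show "{1..ader_N L} \<noteq> {}" using ader_N_ge1[of L] by simp
  show "(\<Sum>m = 1..ader_N L. ader_p Om g f D G L x0 s n m) = 1" using ader_p_dist by blast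
  show "\<And>i. i \<in> {1..ader_N L} \<Longrightarrow> 0 \<le> ader_p Om g f D G L x0 s n i"
    using ader_p_dist by (meson less_imp_le)
  show "\<And>i. i \<in> {1..ader_N L} \<Longrightarrow> ogd Om g (ader_eta D G L i) (x0 i) s n \<in> Om"
    using ogd_in[OF cl] x0 by blast
qed simp

lemma ader_hedge:
  fixes Om :: "'a::euclidean_space set" and f :: "nat \<Rightarrow> 'a \<Rightarrow> real"
  assumes cl: "closed Om" and x0: "\<forall>m. x0 m \<in> Om" and s1: "s \<ge> 1"
    and fb: "\<forall>t\<ge>1. \<forall>w\<in>Om. 0 \<le> f t w \<and> f t w \<le> 1"
    and k: "k \<in> {1..ader_N Lr}" and al: "ader_alpha Lr > 0"
  shows "ader_alpha Lr * ((\<Sum>n<T. \<Sum>m=1..ader_N Lr. ader_p Om g f D G Lr x0 s n m *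
              f (s+n) (ogd Om g (ader_eta D G Lr m) (x0 m) s n))
          - (\<Sum>n<T. f (s+n) (ogd Om g (ader_eta D G Lr k) (x0 k) s n)))
       \<le> - ln (ader_p Om g f D G Lr x0 s 0 k) + real T * (ader_alpha Lr)\<^sup>2 / 8"
proof -
  define N where "N = ader_N Lr"
  define a where "a = ader_alpha Lr"
  define p where "p = ader_p Om g f D G Lr x0 s"
  define l where "l = (\<lambda>n m. f (s+n) (ogd Om g (ader_eta D G Lr m) (x0 m) s n))"
  define mu where "mu = (\<lambda>n. \<Sum>m=1..N. p n m * l n m)"
  have ppos: "\<forall>m\<in>{1..N}. p n m > 0" for n using ader_p_dist unfolding p_def N_def by blast
  have psum: "(\<Sum>m=1..N. p n m) = 1" for n using ader_p_dist unfolding p_def N_def by blast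
  have lb: "0 \<le> l n m \<and> l n m \<le> 1" for n m
    unfolding l_def using fb s1 ogd_in[OF cl] x0 by auto
  have kN: "k \<in> {1..N}" using k by (simp add: N_def)
  have claim: "ln (p n k) \<ge> ln (p 0 k) - (\<Sum>i<n. a * l i k) + (\<Sum>i<n. a * mu i) - (\<Sum>i<n. a\<^sup>2 / 8)" for n
  proof (induction n)
    case 0 thus ?case by simp
  next
    case (Suc n)
    define e where "e = (\<lambda>m. p n m * exp (- a * l n m))"
    have pS: "p (Suc n) m = e m / (\<Sum>m=1..N. e m)" for m
      by (simp add: p_def e_def N_def a_def l_def Let_def)
    have Zpos: "(\<Sum>m=1..N. e m) > 0"
      using ppos[of n] ader_N_ge1[of Lr] unfolding e_def N_def by (intro sum_pos) auto
    have hz: "ln (\<Sum>m=1..N. e m) \<le> - a * mu n + a\<^sup>2 / 8"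
      unfolding e_def mu_def
      by (rule hoeffding_step) (use ppos psum lb al a_def in \<open>auto intro: less_imp_le\<close>)
    have "ln (p (Suc n) k) = ln (p n k) + (- a * l n k) - ln (\<Sum>m=1..N. e m)"
    proof -
      have pk: "p n k > 0" using ppos[of n] kN by blast
      show ?thesis using pk Zpos by (simp add: pS e_def ln_div ln_mult)
    qed
    also have "\<dots> \<ge> ln (p n k) + (- a * l n k) - (- a * mu n + a\<^sup>2 / 8)" using hz by linarith
    finally have "ln (p (Suc n) k) \<ge> ln (p n k) - a * l n k + a * mu n - a\<^sup>2 / 8" by linarith
    thus ?case using Suc.IH by (simp add: distrib_right add_divide_distrib)
  qed
  have "p T k \<le> 1"
  proof -
    have "p T k \<le> (\<Sum>m=1..N. p T m)" using kN ppos[of T]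
      by (intro member_le_sum) (auto intro: less_imp_le)
    thus ?thesis using psum by simp
  qed
  hence "ln (p T k) \<le> 0" using ppos[of T] kN by simp
  hence "a * ((\<Sum>i<T. mu i) - (\<Sum>i<T. l i k)) \<le> - ln (p 0 k) + real T * a\<^sup>2 / 8"
  proof -
    have "a * ((\<Sum>i<T. mu i) - (\<Sum>i<T. l i k)) = (\<Sum>i<T. a * mu i) - (\<Sum>i<T. a * l i k)"
      by (simp add: right_diff_distrib sum_distrib_left)
    moreover have "(\<Sum>i<T. a\<^sup>2 / 8) = real T * a\<^sup>2 / 8" by simp
    ultimately show ?thesis using claim[of T] \<open>ln (p T k) \<le> 0\<close> by linarith
  qed
  thus ?thesis unfolding a_def p_def mu_def l_def N_def .
qed


lemma ader_regret:
  fixes Om :: "'a::euclidean_space set" and f :: "nat \<Rightarrow> 'a \<Rightarrow> real"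
  assumes cvx: "convex Om" and cl: "closed Om" and x0: "\<forall>m. x0 m \<in> Om" and s1: "s \<ge> 1"
    and cF: "\<forall>t\<ge>1. convex_on Om (f t)"
    and fb: "\<forall>t\<ge>1. \<forall>w\<in>Om. 0 \<le> f t w \<and> f t w \<le> 1"
    and L: "L > 0" and k: "k \<in> {1..ader_N (real L)}"
  shows "(\<Sum>n<L. f (s+n) (ader_out Om g f D G (real L) x0 s n))
           - (\<Sum>n<L. f (s+n) (ogd Om g (ader_eta D G (real L) k) (x0 k) s n))
         \<le> sqrt (2 * real L) / 4 * (1 + 2 * ln (real k + 1))"
proof -
  define Lr where "Lr = real L"
  have Lr: "Lr > 0" using L by (simp add: Lr_def)
  define a where "a = ader_alpha Lr"
  have a: "a > 0" using Lr by (simp add: a_def ader_alpha_def)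
  define c where "c = sqrt (2 * Lr) / 4"
  have ac: "a * c = 1"
  proof -
    have "sqrt (8 / Lr) * sqrt (2 * Lr) = sqrt (8 / Lr * (2 * Lr))" by (simp only: real_sqrt_mult)
    also have "8 / Lr * (2 * Lr) = 4\<^sup>2" using Lr by simp
    also have "sqrt ((4::real)\<^sup>2) = 4" by simp
    finally have "sqrt (8 / Lr) * sqrt (2 * Lr) = 4" .
    thus ?thesis by (simp add: a_def c_def ader_alpha_def)
  qed
  have Lac: "Lr * a / 8 = c"
  proof -
    have "Lr * sqrt (8 / Lr) = sqrt (Lr\<^sup>2) * sqrt (8 / Lr)" using Lr by simp
    also have "\<dots> = sqrt (Lr\<^sup>2 * (8 / Lr))" by (simp only: real_sqrt_mult)
    also have "Lr\<^sup>2 * (8 / Lr) = 2\<^sup>2 * (2 * Lr)" using Lr by (simp add: power2_eq_square)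
    also have "sqrt (2\<^sup>2 * (2 * Lr)) = 2 * sqrt (2 * Lr)" by (simp only: real_sqrt_mult real_sqrt_abs)
    finally show ?thesis by (simp add: a_def c_def ader_alpha_def)
  qed
  define N where "N = ader_N Lr"
  define p where "p = ader_p Om g f D G Lr x0 s"
  define l where "l = (\<lambda>n m. f (s+n) (ogd Om g (ader_eta D G Lr m) (x0 m) s n))"
  have k1: "k \<ge> 1" using k by simp
  have J: "(\<Sum>n<L. f (s+n) (ader_out Om g f D G Lr x0 s n)) \<le> (\<Sum>n<L. \<Sum>m=1..N. p n m * l n m)"
    unfolding p_def l_def N_def
    by (intro sum_mono ader_jensen[OF cvx cl x0]) (use cF s1 in auto)
  have Hh: "a * ((\<Sum>n<L. \<Sum>m=1..N. p n m * l n m) - (\<Sum>n<L. l n k)) \<le> - ln (p 0 k) + real L * a\<^sup>2 / 8"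
    unfolding a_def p_def l_def N_def
    by (rule ader_hedge[OF cl x0 s1 fb]) (use k a in \<open>auto simp: Lr_def a_def\<close>)
  have lnp: "- ln (p 0 k) \<le> 2 * ln (real k + 1)"
  proof -
    have N1: "N \<ge> 1" using ader_N_ge1 by (simp add: N_def)
    have p0: "p 0 k = (1 + 1 / real N) / (real k * (real k + 1))" by (simp add: p_def N_def)
    have kk: "real k * (real k + 1) > 0" using k1 by simp
    have "1 / (real k + 1)\<^sup>2 \<le> 1 / (real k * (real k + 1))"
      using k1 by (intro divide_left_mono) (auto simp: power2_eq_square)
    also have "\<dots> \<le> p 0 k" unfolding p0 using kk by (intro divide_right_mono) auto
    finally have le: "1 / (real k + 1)\<^sup>2 \<le> p 0 k" .
    have pos: "0 < 1 / (real k + 1)\<^sup>2" by simp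
    have "ln (1 / (real k + 1)\<^sup>2) \<le> ln (p 0 k)" 
    proof -
      have p0p: "0 < p 0 k" using le pos by linarith
      show ?thesis using le by (simp only: ln_le_cancel_iff[OF pos p0p])
    qed
    moreover have "ln (1 / (real k + 1)\<^sup>2) = - (2 * ln (real k + 1))"
      by (simp add: ln_div ln_realpow)
    ultimately show ?thesis by linarith
  qed
  have "a * ((\<Sum>n<L. \<Sum>m=1..N. p n m * l n m) - (\<Sum>n<L. l n k))
        \<le> a * (c * (2 * ln (real k + 1)) + c)"
  proof -
    have "a * (c * (2 * ln (real k + 1)) + c) = 2 * ln (real k + 1) + Lr * a\<^sup>2 / 8"
    proof -
      have e0: "Lr * a\<^sup>2 / 8 = a * (Lr * a / 8)" by (simp add: power2_eq_square)
      have e1: "Lr * a\<^sup>2 / 8 = 1" unfolding e0 Lac ac ..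
      have "a * (c * (2 * ln (real k + 1)) + c) = (a * c) * (2 * ln (real k + 1)) + a * c"
        by (simp add: algebra_simps)
      thus ?thesis unfolding ac e1 by simp
    qed
    thus ?thesis using Hh lnp by (simp add: Lr_def)
  qed
  hence "(\<Sum>n<L. \<Sum>m=1..N. p n m * l n m) - (\<Sum>n<L. l n k) \<le> c * (2 * ln (real k + 1)) + c"
    using a by simp
  hence "(\<Sum>n<L. f (s+n) (ader_out Om g f D G Lr x0 s n)) - (\<Sum>n<L. l n k) \<le> c * (1 + 2 * ln (real k + 1))"
    using J by (simp add: algebra_simps)
  thus ?thesis unfolding c_def l_def Lr_def .
qed


lemma hist_len: "length (aoa_hist f E n) = n"
  by (induction n) (auto simp: Let_def)

lemma hist_nth: "u < n \<Longrightarrow> aoa_hist f E n ! u = aoa_hist f E (Suc u) ! u"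
proof (induction n)
  case 0 thus ?case by simp
next
  case (Suc n)
  show ?case
  proof (cases "u < n")
    case True
    have "aoa_hist f E (Suc n) ! u = aoa_hist f E n ! u"
      using True by (simp add: Let_def nth_append hist_len)
    thus ?thesis using Suc True by simp
  next
    case False
    hence "u = n" using Suc by simp
    thus ?thesis by simp
  qed
qed

lemma aoa_play_cong:
  assumes "\<forall>J\<in>active t. \<forall>u\<in>{int_start J..<t}. w1 u = w2 u"
  shows "aoa_play f E w1 t = aoa_play f E w2 t"
proof -
  have R: "aoa_R f E w1 t J = aoa_R f E w2 t J" if "J \<in> active t" for J
    unfolding aoa_R_def using assms that by (intro sum.cong) auto
  have C: "aoa_C f E w1 t J = aoa_C f E w2 t J" if "J \<in> active t" for J
    unfolding aoa_C_def using assms that by (intro sum.cong) auto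
  have Z: "(\<Sum>J\<in>active t. anh_w (aoa_R f E w1 t J) (aoa_C f E w1 t J))
         = (\<Sum>J\<in>active t. anh_w (aoa_R f E w2 t J) (aoa_C f E w2 t J))"
    using R C by (intro sum.cong) auto
  show ?thesis unfolding aoa_play_def Let_def Z
    using R C by (intro sum.cong) auto
qed

lemma start_ge1: "J \<in> covering \<Longrightarrow> int_start J \<ge> 1"
  by (cases J) (auto simp: covering_def int_start_def)

lemma aoa_rec:
  assumes t: "t \<ge> 1"
  shows "aoa Om g f D G X0 t = aoa_play f (expert_out Om g f D G X0) (aoa Om g f D G X0) t"
proof -
  define E where "E = expert_out Om g f D G X0"
  define h where "h = aoa_hist f E (t - 1)"
  obtain m where tm: "t = Suc m" using t by (cases t) auto
  have "aoa Om g f D G X0 t = aoa_hist f E (Suc m) ! m"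
    using tm by (simp add: aoa_def E_def)
  also have "\<dots> = aoa_play f E (\<lambda>u. h ! (u - 1)) t"
    using tm by (simp add: Let_def h_def nth_append hist_len)
  also have "\<dots> = aoa_play f E (aoa Om g f D G X0) t"
  proof (rule aoa_play_cong, intro ballI)
    fix J u assume J: "J \<in> active t" and u: "u \<in> {int_start J..<t}"
    have u1: "u \<ge> 1" using start_ge1[of J] J u by (auto simp: active_def)
    have "h ! (u - 1) = aoa_hist f E (Suc (u-1)) ! (u-1)"
      unfolding h_def using u u1 by (intro hist_nth) auto
    also have "\<dots> = aoa Om g f D G X0 u" using u1 by (simp add: aoa_def E_def)
    finally show "h ! (u - 1) = aoa Om g f D G X0 u" .
  qed
  finally show ?thesis by (simp add: E_def)
qed

lemma active_sub: "active t \<subseteq> {..t} \<times> {..t}"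
proof
  fix J assume J: "J \<in> active t"
  obtain k i where Jk: "J = (k, i)" by (cases J)
  have i1: "i \<ge> 1" and le: "i * 2 ^ k \<le> t" using J Jk by (auto simp: active_def covering_def int_start_def)
  have "i \<le> i * 2 ^ k" by simp
  hence "i \<le> t" using le by linarith
  moreover have "k < 2 ^ k" by (rule less_exp)
  hence "k \<le> t" using le i1 by (metis dual_order.trans le_add2 less_imp_le mult_le_mono1 mult_1 nat_mult_1)
  ultimately show "J \<in> {..t} \<times> {..t}" using Jk by auto
qed

lemma finite_active: "finite (active t)"
  by (rule finite_subset[OF active_sub]) auto

definition Gf :: "real \<Rightarrow> real" where
  "Gf x = (if x \<le> 1 then x else 1 + ln x)"

lemma Gf_step:
  assumes C: "C \<ge> 0" and x: "0 \<le> x" "x \<le> 1"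
  shows "Gf C + x / (C + 1) \<le> Gf (C + x)"
proof -
  have xd: "x / (C + 1) \<le> x / 1" using C x by (intro divide_left_mono) auto
  consider "C + x \<le> 1" | "C > 1" | "C \<le> 1" "1 < C + x" by linarith
  thus ?thesis
  proof cases
    case 1
    have "C \<le> 1" using 1 x by linarith
    thus ?thesis using 1 xd C by (simp add: Gf_def)
  next
    case 2
    have pos: "C + x > 0" using 2 x by simp
    have "ln (C / (C + x)) \<le> C / (C + x) - 1" using 2 pos by (intro ln_le_minus_one) simp
    also have "C / (C + x) - 1 = - (x / (C + x))" using pos by (simp add: field_simps)
    finally have "x / (C + x) \<le> ln (C + x) - ln C" using 2 pos by (simp add: ln_div)
    moreover have "x / (C + 1) \<le> x / (C + x)" using x 2 by (intro divide_left_mono) auto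
    ultimately show ?thesis using 2 x by (simp add: Gf_def)
  next
    case 3
    define y where "y = C + x"
    have y1: "y > 1" and yC: "y \<le> C + 1" using 3 x by (auto simp: y_def)
    have "ln (1 / y) \<le> 1 / y - 1" using y1 by (intro ln_le_minus_one) simp
    hence lny: "(y - 1) / y \<le> ln y" using y1 by (simp add: ln_div field_simps)
    have xs: "x / (C + 1) = (y - 1) / (C + 1) + (1 - C) / (C + 1)"
      by (simp add: y_def add_divide_distrib [symmetric])
    have a1: "(y - 1) / (C + 1) \<le> (y - 1) / y" using y1 yC by (intro divide_left_mono) auto
    have a2: "(1 - C) / (C + 1) \<le> (1 - C) / 1" using 3 C by (intro divide_left_mono) auto
    have "Gf C + x / (C + 1) \<le> C + (y - 1) / y + (1 - C)"
      using 3 xs a1 a2 by (simp add: Gf_def)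
    also have "\<dots> \<le> 1 + ln y" using lny by simp
    also have "\<dots> = Gf (C + x)" using y1 by (simp add: Gf_def y_def)
    finally show ?thesis .
  qed
qed

lemma Gf_bound: "x \<ge> 0 \<Longrightarrow> Gf x \<le> 1 + ln (1 + x)"
proof (cases "x \<le> 1")
  case True
  moreover assume "x \<ge> 0"
  moreover have "ln (1 + x) \<ge> 0" using \<open>x \<ge> 0\<close> by simp
  moreover have "Gf x = x" using True by (simp add: Gf_def)
  ultimately show ?thesis by linarith
next
  case False
  hence "ln x \<le> ln (1 + x)" by simp
  thus ?thesis using False by (simp add: Gf_def)
qed


lemma aoa_C_nonneg: "aoa_C f E w t J \<ge> 0"
  unfolding aoa_C_def by (intro sum_nonneg) auto

lemma W_key:
  fixes Om :: "'a::euclidean_space set" and f :: "nat \<Rightarrow> 'a \<Rightarrow> real"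
  assumes cvx: "convex Om" and O0: "0 \<in> Om"
    and cF: "convex_on Om F"
    and Ein: "\<forall>K. E t K \<in> Om"
    and Wt: "Wt = aoa_play f E W t"
  shows "Wt \<in> Om \<and>
     (\<Sum>K\<in>active t. anh_w (aoa_R f E W t K) (aoa_C f E W t K) * (F Wt - F (E t K))) \<le> 0"
proof -
  define wt where "wt = (\<lambda>K. anh_w (aoa_R f E W t K) (aoa_C f E W t K))"
  define Z where "Z = (\<Sum>K\<in>active t. wt K)"
  have wt0: "wt K \<ge> 0" for K unfolding wt_def by (rule anh_w_nonneg[OF aoa_C_nonneg])
  have fin: "finite (active t)" by (rule finite_active)
  have Wt': "Wt = (\<Sum>K\<in>active t. (wt K / Z) *\<^sub>R E t K)"
    unfolding Wt aoa_play_def Let_def wt_def Z_def ..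
  show ?thesis
  proof (cases "Z = 0")
    case True
    hence all0: "\<forall>K\<in>active t. wt K = 0" using sum_nonneg_eq_0_iff[OF fin] wt0 unfolding Z_def by blast
    have "Wt = 0" unfolding Wt' using True by simp
    moreover have "(\<Sum>K\<in>active t. wt K * (F Wt - F (E t K))) = 0" using all0 by simp
    ultimately show ?thesis using O0 by (simp add: wt_def)
  next
    case False
    hence Zp: "Z > 0" using wt0 unfolding Z_def by (metis less_eq_real_def sum_nonneg)
    have ne: "active t \<noteq> {}" using False unfolding Z_def by auto
    have s1: "(\<Sum>K\<in>active t. wt K / Z) = 1" using Zp unfolding Z_def by (simp flip: sum_divide_distrib)
    have a0: "\<And>K. K \<in> active t \<Longrightarrow> 0 \<le> wt K / Z" using wt0 Zp by simp
    have WO: "Wt \<in> Om" unfolding Wt' by (rule convex_sum[OF fin cvx s1 a0]) (use Ein in auto)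
    have J: "F Wt \<le> (\<Sum>K\<in>active t. (wt K / Z) * F (E t K))"
      unfolding Wt' by (rule convex_on_sum[OF fin ne cF s1 a0]) (use Ein in auto)
    have "(\<Sum>K\<in>active t. wt K * (F Wt - F (E t K))) = Z * F Wt - (\<Sum>K\<in>active t. wt K * F (E t K))"
      unfolding Z_def by (simp add: right_diff_distrib sum_subtractf sum_distrib_right)
    also have "(\<Sum>K\<in>active t. wt K * F (E t K)) = Z * (\<Sum>K\<in>active t. (wt K / Z) * F (E t K))"
      using Zp by (simp add: sum_distrib_left)
    also have "Z * F Wt - Z * (\<Sum>K\<in>active t. (wt K / Z) * F (E t K)) \<le> 0"
      using J Zp by (simp add: right_diff_distrib[symmetric] mult_le_0_iff)
    finally show ?thesis using WO by (simp add: wt_def)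
  qed
qed


lemma covering_S_sub:
  assumes j: "j \<ge> 1"
  shows "{K \<in> covering. int_start K \<le> j} \<subseteq> {0..nat \<lfloor>log 2 (real j)\<rfloor>} \<times> {1..j}"
proof
  fix K assume K: "K \<in> {K \<in> covering. int_start K \<le> j}"
  obtain k i where Kk: "K = (k, i)" by (cases K)
  have i1: "i \<ge> 1" and le: "i * 2 ^ k \<le> j" using K Kk by (auto simp: covering_def int_start_def)
  have "i \<le> i * 2 ^ k" by simp
  hence ij: "i \<le> j" using le by linarith
  have "2 ^ k \<le> i * 2 ^ k" using i1 by simp
  hence "2 ^ k \<le> j" using le by linarith
  hence "real k \<le> log 2 (real j)" by (rule le_log2_of_power)
  hence "int k \<le> \<lfloor>log 2 (real j)\<rfloor>" by (simp add: le_floor_iff)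
  hence "k \<le> nat \<lfloor>log 2 (real j)\<rfloor>" by linarith
  thus "K \<in> {0..nat \<lfloor>log 2 (real j)\<rfloor>} \<times> {1..j}" using Kk i1 ij by auto
qed

lemma covering_S_card:
  assumes j: "j \<ge> 1"
  shows "finite {K \<in> covering. int_start K \<le> j}"
    and "real (card {K \<in> covering. int_start K \<le> j}) \<le> real j * (1 + log 2 (real j))"
proof -
  let ?S = "{K \<in> covering. int_start K \<le> j}"
  let ?B = "{0..nat \<lfloor>log 2 (real j)\<rfloor>} \<times> {1..j}"
  show "finite ?S" by (rule finite_subset[OF covering_S_sub[OF j]]) auto
  have "card ?S \<le> card ?B" by (rule card_mono) (use covering_S_sub[OF j] in auto)
  also have "card ?B = (nat \<lfloor>log 2 (real j)\<rfloor> + 1) * j" by (simp add: card_cartesian_product)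
  finally have c: "real (card ?S) \<le> (real (nat \<lfloor>log 2 (real j)\<rfloor>) + 1) * real j"
    by (metis of_nat_add of_nat_le_iff of_nat_mult of_nat_1)
  have lg: "log 2 (real j) \<ge> 0" using j by simp
  have "real (nat \<lfloor>log 2 (real j)\<rfloor>) \<le> log 2 (real j)" using lg by linarith
  hence "(real (nat \<lfloor>log 2 (real j)\<rfloor>) + 1) * real j \<le> (log 2 (real j) + 1) * real j"
    by (intro mult_right_mono) auto
  thus "real (card ?S) \<le> real j * (1 + log 2 (real j))" using c by (simp add: algebra_simps)
qed


lemma lin_aux:
  fixes a b c d e q h :: real
  assumes "a \<le> b + c + q" "d + h \<le> e" "q = 3/2 * h"
  shows "a - 3/2 * e \<le> b - 3/2 * d + c"
  using assms by linarith

lemma meta_regret: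
  fixes Om :: "'a::euclidean_space set" and f :: "nat \<Rightarrow> 'a \<Rightarrow> real"
    and E :: "nat \<Rightarrow> nat \<times> nat \<Rightarrow> 'a" and W :: "nat \<Rightarrow> 'a"
  assumes cvx: "convex Om" and O0: "0 \<in> Om"
    and cF: "\<forall>t\<ge>1. convex_on Om (f t)"
    and fb: "\<forall>t\<ge>1. \<forall>w\<in>Om. 0 \<le> f t w \<and> f t w \<le> 1"
    and Ein: "\<forall>t K. E t K \<in> Om"
    and Wrec: "\<forall>t\<ge>1. W t = aoa_play f E W t"
    and J: "J \<in> covering"
  shows "(\<Sum>t=int_start J..int_end J. f t (W t) - f t (E t J))
     \<le> sqrt (3 * real (int_len J) * (1 + ln (real (int_end J)) + ln (1 + log 2 (real (int_end J)))
              + ln ((5 + 3 * ln (1 + real (int_end J))) / 2)))"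
proof -
  define i where "i = int_start J"
  define j where "j = int_end J"
  define r where "r = (\<lambda>t K. f t (W t) - f t (E t K))"
  define RR where "RR = (\<lambda>\<tau> K. aoa_R f E W \<tau> K)"
  define CC where "CC = (\<lambda>\<tau> K. aoa_C f E W \<tau> K)"
  have RRr: "RR \<tau> K = (\<Sum>u\<in>{int_start K..<\<tau>}. r u K)" for \<tau> K
    by (simp add: RR_def aoa_R_def r_def)
  have CCr: "CC \<tau> K = (\<Sum>u\<in>{int_start K..<\<tau>}. \<bar>r u K\<bar>)" for \<tau> K
    by (simp add: CC_def aoa_C_def r_def)
  have i1: "i \<ge> 1" using start_ge1[OF J] by (simp add: i_def)
  obtain k0 i0 where Jk: "J = (k0, i0)" by (cases J)
  have i01: "i0 \<ge> 1" using J Jk by (simp add: covering_def)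
  have jdef: "j + 1 = (i0 + 1) * 2 ^ k0" using Jk by (simp add: j_def int_end_def)
  have idef: "i = i0 * 2 ^ k0" using Jk by (simp add: i_def int_start_def)
  have Ldef: "int_len J = 2 ^ k0" using Jk by (simp add: int_len_def)
  have jiL: "j + 1 - i = int_len J" using jdef idef Ldef by (simp add: algebra_simps)
  have ij: "i \<le> j" using jiL jdef idef Ldef by (metis Suc_eq_plus1 diff_is_0_eq less_Suc_eq_le not_less pos2 zero_less_power
                 less_numeral_extra(3) nat_less_le)
  have j1: "j \<ge> 1" using i1 ij by simp
  have key: "W t \<in> Om \<and> (\<Sum>K\<in>active t. anh_w (RR t K) (CC t K) * r t K) \<le> 0" if t: "t \<ge> 1" for t
    using W_key[OF cvx O0 _ _ Wrec[rule_format, OF t], of "f t"] cF fb Ein t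
    by (simp add: RR_def CC_def r_def)
  have rb: "\<bar>r t K\<bar> \<le> 1" if t: "t \<ge> 1" for t K
  proof -
    have "W t \<in> Om" using key t by blast
    thus ?thesis using fb t Ein unfolding r_def by (smt (verit))
  qed
  have RC: "\<bar>RR \<tau> K\<bar> \<le> CC \<tau> K" for \<tau> K unfolding RRr CCr by (rule sum_abs)
  have C0: "CC \<tau> K \<ge> 0" for \<tau> K unfolding CCr by (intro sum_nonneg) auto
  have Cle: "CC \<tau> K \<le> real (\<tau> - int_start K)" if "K \<in> covering" for \<tau> K
  proof -
    have "CC \<tau> K \<le> real (card {int_start K..<\<tau>}) * 1" unfolding CCr
      by (rule sum_bounded_above) (use rb start_ge1[OF that] in auto)
    thus ?thesis by simp
  qed
  define mm where "mm = (\<lambda>\<tau> K. min \<tau> (int_end K + 1))"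
  define tm where "tm = (\<lambda>\<tau> K. anh_Phi (RR (mm \<tau> K) K) (CC (mm \<tau> K) K) - 3/2 * Gf (CC (mm \<tau> K) K))"
  define S where "S = {K \<in> covering. int_start K \<le> j}"
  define V where "V = (\<lambda>\<tau>. \<Sum>K\<in>S. tm \<tau> K)"
  have finS: "finite S" unfolding S_def by (rule covering_S_card(1)[OF j1])
  have cardS: "real (card S) \<le> real j * (1 + log 2 (real j))" unfolding S_def by (rule covering_S_card(2)[OF j1])
  have JS: "J \<in> S" using J ij by (simp add: S_def i_def)
  have actS: "active t \<subseteq> S" if "t \<le> j" for t using that by (auto simp: active_def S_def)
  have empty0: "RR \<tau> K = 0 \<and> CC \<tau> K = 0" if "\<tau> \<le> int_start K" for \<tau> K
    unfolding RRr CCr using that by simp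
  have step: "tm (Suc t) K \<le> tm t K + (if K \<in> active t then anh_w (RR t K) (CC t K) * r t K else 0)"
    if t1: "t \<ge> 1" and KS: "K \<in> S" for t K
  proof (cases "K \<in> active t")
    case True
    hence st: "int_start K \<le> t" "t \<le> int_end K" by (auto simp: active_def)
    have m1: "mm t K = t" "mm (Suc t) K = Suc t" using st by (auto simp: mm_def)
    have R1: "RR (Suc t) K = RR t K + r t K" unfolding RRr using st by simp
    have C1: "CC (Suc t) K = CC t K + \<bar>r t K\<bar>" unfolding CCr using st by simp
    have P: "anh_Phi (RR t K + r t K) (CC t K + \<bar>r t K\<bar>)
          \<le> anh_Phi (RR t K) (CC t K) + anh_w (RR t K) (CC t K) * r t K + 3 * \<bar>r t K\<bar> / (2 * (CC t K + 1))"
      by (rule pot_step[OF C0 RC rb[OF t1]])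
    have Gs: "Gf (CC t K) + \<bar>r t K\<bar> / (CC t K + 1) \<le> Gf (CC t K + \<bar>r t K\<bar>)"
      by (rule Gf_step[OF C0]) (use rb[OF t1] in auto)
    have eq: "3 * \<bar>r t K\<bar> / (2 * (CC t K + 1)) = 3/2 * (\<bar>r t K\<bar> / (CC t K + 1))" by simp
    have "tm (Suc t) K \<le> tm t K + anh_w (RR t K) (CC t K) * r t K"
      unfolding tm_def m1 R1 C1 by (rule lin_aux[OF P Gs eq])
    thus ?thesis using True by simp
  next
    case False
    have KC: "K \<in> covering" using KS by (simp add: S_def)
    have "t < int_start K \<or> t > int_end K" using False KC by (auto simp: active_def)
    hence "tm (Suc t) K = tm t K"
    proof
      assume "t < int_start K"
      hence "mm (Suc t) K \<le> int_start K" "mm t K \<le> int_start K" by (auto simp: mm_def)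
      thus ?thesis unfolding tm_def using empty0 by simp
    next
      assume "t > int_end K"
      hence "mm (Suc t) K = mm t K" by (simp add: mm_def)
      thus ?thesis unfolding tm_def by simp
    qed
    thus ?thesis using False by simp
  qed
  have Vstep: "V (Suc t) \<le> V t" if t1: "t \<ge> 1" and tj: "t \<le> j" for t
  proof -
    have "V (Suc t) \<le> (\<Sum>K\<in>S. tm t K + (if K \<in> active t then anh_w (RR t K) (CC t K) * r t K else 0))"
      unfolding V_def by (intro sum_mono step[OF t1])
    also have "\<dots> = V t + (\<Sum>K\<in>S \<inter> active t. anh_w (RR t K) (CC t K) * r t K)"
      unfolding V_def sum.distrib by (simp add: sum.inter_restrict[OF finS])
    also have "S \<inter> active t = active t" using actS[OF tj] by blast
    also have "(\<Sum>K\<in>active t. anh_w (RR t K) (CC t K) * r t K) \<le> 0" using key[OF t1] by blast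
    finally show ?thesis by simp
  qed
  have Vmono: "t \<ge> 1 \<Longrightarrow> t \<le> Suc j \<Longrightarrow> V t \<le> V 1" for t
  proof (induction t)
    case 0 thus ?case by simp
  next
    case (Suc t)
    show ?case
    proof (cases "t = 0")
      case True thus ?thesis by simp
    next
      case False
      hence "V (Suc t) \<le> V t" using Suc by (intro Vstep) auto
      also have "V t \<le> V 1" using Suc False by simp
      finally show ?thesis .
    qed
  qed
  have V1: "V 1 = real (card S)"
  proof -
    have "tm 1 K = 1" if "K \<in> S" for K
    proof -
      have KC: "K \<in> covering" using that by (simp add: S_def)
      have "mm 1 K = 1" by (simp add: mm_def)
      moreover have "RR 1 K = 0 \<and> CC 1 K = 0" using empty0 start_ge1[OF KC] by blast
      ultimately show ?thesis by (simp add: tm_def Gf_def anh_Phi_def)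
    qed
    thus ?thesis unfolding V_def by simp
  qed
  define B where "B = 1 + ln (1 + real j)"
  have GB: "Gf (CC (mm (Suc j) K) K) \<le> B" if "K \<in> S" for K
  proof -
    have KC: "K \<in> covering" using that by (simp add: S_def)
    have "CC (mm (Suc j) K) K \<le> real (mm (Suc j) K - int_start K)" by (rule Cle[OF KC])
    also have "\<dots> \<le> real j" using start_ge1[OF KC] by (simp add: mm_def)
    finally have cj: "CC (mm (Suc j) K) K \<le> real j" .
    have "Gf (CC (mm (Suc j) K) K) \<le> 1 + ln (1 + CC (mm (Suc j) K) K)" by (rule Gf_bound[OF C0])
    also have "\<dots> \<le> B"
    proof -
      have c0: "0 \<le> CC (mm (Suc j) K) K" by (rule C0)
      have p1: "0 < 1 + CC (mm (Suc j) K) K" using c0 by linarith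
      have p2: "0 < 1 + real j" by simp
      have "ln (1 + CC (mm (Suc j) K) K) \<le> ln (1 + real j)"
        using cj by (simp only: ln_le_cancel_iff[OF p1 p2])
      thus ?thesis unfolding B_def by simp
    qed
    finally show ?thesis .
  qed
  have mJ: "mm (Suc j) J = Suc j" by (simp add: mm_def j_def)
  define R where "R = RR (Suc j) J"
  define C where "C = CC (Suc j) J"
  have PhiJ: "anh_Phi R C \<le> real (card S) * (5 + 3 * ln (1 + real j)) / 2"
  proof -
    have "anh_Phi R C \<le> (\<Sum>K\<in>S. anh_Phi (RR (mm (Suc j) K) K) (CC (mm (Suc j) K) K))"
    proof -
      have "anh_Phi (RR (mm (Suc j) J) J) (CC (mm (Suc j) J) J) \<le> (\<Sum>K\<in>S. anh_Phi (RR (mm (Suc j) K) K) (CC (mm (Suc j) K) K))"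
      proof (rule member_le_sum[OF JS _ finS])
        fix K assume "K \<in> S - {J}"
        have "1 \<le> anh_Phi (RR (mm (Suc j) K) K) (CC (mm (Suc j) K) K)" by (rule anh_Phi_ge1[OF C0])
        thus "0 \<le> anh_Phi (RR (mm (Suc j) K) K) (CC (mm (Suc j) K) K)" by linarith
      qed
      thus ?thesis unfolding R_def C_def mJ .
    qed
    also have "\<dots> = V (Suc j) + (\<Sum>K\<in>S. 3/2 * Gf (CC (mm (Suc j) K) K))"
      unfolding V_def tm_def by (simp add: sum_subtractf)
    also have "\<dots> \<le> V 1 + (\<Sum>K\<in>S. 3/2 * B)"
      using Vmono[of "Suc j"] GB by (intro add_mono sum_mono) auto
    also have "\<dots> = real (card S) * (5 + 3 * ln (1 + real j)) / 2"
      unfolding V1 B_def by (simp add: field_simps)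
    finally show ?thesis .
  qed
  have sumR: "(\<Sum>t=i..j. f t (W t) - f t (E t J)) = R"
    unfolding R_def RRr r_def i_def by (simp add: atLeastLessThanSuc_atLeastAtMost)
  have CL: "C \<le> real (int_len J)" using Cle[OF J, of "Suc j"] jiL by (simp add: C_def i_def)
  define c' where "c' = 1 + ln (real j) + ln (1 + log 2 (real j)) + ln ((5 + 3 * ln (1 + real j)) / 2)"
  have lg0: "log 2 (real j) \<ge> 0" using j1 by simp
  have A0: "(5 + 3 * ln (1 + real j)) / 2 \<ge> 1" using j1 by simp
  have c'0: "c' \<ge> 0" unfolding c'_def using j1 lg0 A0 by simp
  have cS1: "real (card S) \<ge> 1" using finS JS by (simp add: Suc_le_eq card_gt_0_iff) blast
  define M where "M = real (card S) * (5 + 3 * ln (1 + real j)) / 2"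
  have M1: "M \<ge> 1"
  proof -
    have "1 * 1 \<le> real (card S) * ((5 + 3 * ln (1 + real j)) / 2)"
      by (rule mult_mono[OF cS1 A0]) auto
    thus ?thesis by (simp add: M_def)
  qed
  have lnM: "ln M \<le> c'"
  proof -
    have "ln M = ln (real (card S)) + ln ((5 + 3 * ln (1 + real j)) / 2)"
    proof -
      have Mf: "M = real (card S) * ((5 + 3 * ln (1 + real j)) / 2)" by (simp add: M_def)
      show ?thesis unfolding Mf by (rule ln_mult_pos) (use cS1 A0 in linarith)+
    qed
    also have "ln (real (card S)) \<le> ln (real j * (1 + log 2 (real j)))"
      using cardS cS1 by simp
    also have "\<dots> = ln (real j) + ln (1 + log 2 (real j))" by (rule ln_mult_pos) (use j1 lg0 in linarith)+
    finally show ?thesis unfolding c'_def by simp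
  qed
  have "R \<le> sqrt (3 * real (int_len J) * c')"
  proof (cases "R \<le> 0")
    case True
    have "0 \<le> 3 * real (int_len J) * c'" using c'0 by simp
    hence "0 \<le> sqrt (3 * real (int_len J) * c')" by simp
    thus ?thesis using True by linarith
  next
    case False
    have Cp: "C > 0" using False RC[of "Suc j" J] by (simp add: R_def C_def)
    have "exp (R\<^sup>2 / (3 * C)) = anh_Phi R C" using False by (simp add: anh_Phi_eq max_def)
    also have "\<dots> \<le> M" using PhiJ by (simp add: M_def)
    finally have ex: "exp (R\<^sup>2 / (3 * C)) \<le> M" .
    have Mp: "0 < M" using M1 by linarith
    have "ln (exp (R\<^sup>2 / (3 * C))) \<le> ln M" using ex by (simp only: ln_le_cancel_iff[OF exp_gt_zero Mp])
    hence "R\<^sup>2 / (3 * C) \<le> ln M" by simp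
    hence "R\<^sup>2 \<le> 3 * C * ln M" using Cp by (simp add: divide_le_eq mult.commute)
    also have "\<dots> \<le> 3 * real (int_len J) * c'"
      using CL lnM Cp M1 by (intro mult_mono) auto
    finally show ?thesis by (rule real_le_rsqrt)
  qed
  thus ?thesis using sumR unfolding c'_def i_def j_def by linarith
qed


lemma sum_reindex_int:
  fixes i L :: nat
  shows "(\<Sum>t\<in>{i..<i+L}. h t) = (\<Sum>n<L. h (i+n))"
  by (induction L) auto

lemma sum_reindex_int2:
  fixes i j L :: nat
  assumes "j + 1 = i + L"
  shows "(\<Sum>t=i..j. h t) = (\<Sum>n<L. h (i+n))"
proof -
  have "{i..j} = {i..<i+L}" using assms by auto
  thus ?thesis using sum_reindex_int by simp
qed

lemma eta_bound:
  fixes A B eta :: real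
  assumes A: "A > 0" and B: "B > 0" and e: "eta > 0"
    and l1: "B * eta\<^sup>2 \<le> A" and l2: "A \<le> 4 * B * eta\<^sup>2"
  shows "A / eta + B * eta \<le> 3 * sqrt (A * B)"
proof -
  define s where "s = sqrt (A * B)"
  define x where "x = B * eta"
  have x0: "x > 0" using B e by (simp add: x_def)
  have AB: "A * B > 0" using A B by simp
  have s2: "s\<^sup>2 = A * B" unfolding s_def by (rule real_sqrt_pow2) (use AB in linarith)
  have s0: "s \<ge> 0" unfolding s_def by (rule real_sqrt_ge_zero) (use AB in linarith)
  have "x\<^sup>2 \<le> A * B"
  proof -
    have "x\<^sup>2 = B * (B * eta\<^sup>2)" by (simp add: x_def power2_eq_square)
    also have "\<dots> \<le> B * A" using l1 B by (intro mult_left_mono) auto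
    finally show ?thesis by (simp add: mult.commute)
  qed
  hence xs: "x \<le> s" unfolding s_def by (rule real_le_rsqrt)
  have "s \<le> 2 * x"
  proof -
    have "A * B \<le> (2 * x)\<^sup>2"
    proof -
      have "A * B \<le> (4 * B * eta\<^sup>2) * B" using l2 B by (intro mult_right_mono) auto
      also have "\<dots> = (2 * x)\<^sup>2" by (simp add: x_def power2_eq_square)
      finally show ?thesis .
    qed
    hence h: "sqrt (A * B) \<le> sqrt ((2 * x)\<^sup>2)" by (rule real_sqrt_le_mono)
    have e2: "sqrt ((2 * x)\<^sup>2) = 2 * x" using x0 by (simp only: real_sqrt_abs)
    show ?thesis unfolding s_def using h e2 by linarith
  qed
  hence sx: "s \<le> 2 * x" .
  have "(x - s/2) * (x - s) \<le> 0" using xs sx by (intro mult_nonneg_nonpos) auto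
  moreover have "(x - s / 2) * (x - s) = x * x - 3 / 2 * (s * x) + 1 / 2 * (s * s)" by (simp add: field_simps)
  moreover have p: "s * s \<le> s * (2 * x)" using sx s0 by (intro mult_left_mono)
  moreover have "s * (2 * x) = 2 * (s * x)" by simp
  moreover have "0 \<le> s * x" using s0 x0 by simp
  ultimately have q0: "x * x + s * s \<le> 3 * (s * x)" by linarith
  have q: "x\<^sup>2 + s\<^sup>2 \<le> 3 * s * x" using q0 by (simp add: power2_eq_square mult.assoc)
  have "A / eta + B * eta = (A * B + x\<^sup>2) / x" using e B by (simp add: x_def field_simps power2_eq_square)
  also have "\<dots> \<le> (3 * s * x) / x" using q s2 x0 by (intro divide_right_mono) auto
  also have "\<dots> = 3 * s" using x0 by simp
  finally show ?thesis by (simp add: s_def)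
qed


lemma k_facts:
  fixes D P Lr :: real
  assumes D: "D > 0" and P: "P \<ge> 0" and PL: "P \<le> Lr * D"
  defines "kJ \<equiv> \<lfloor>log 2 (1 + 4 * P / (7 * D)) / 2\<rfloor> + 1"
  shows "kJ \<ge> 1" and "nat kJ \<le> ader_N Lr"
    and "7 * (2 ^ (nat kJ - 1))\<^sup>2 * D\<^sup>2 \<le> 7 * D\<^sup>2 + 4 * D * P"
    and "7 * D\<^sup>2 + 4 * D * P \<le> 28 * (2 ^ (nat kJ - 1))\<^sup>2 * D\<^sup>2"
proof -
  define z where "z = 1 + 4 * P / (7 * D)"
  have z1: "z \<ge> 1" using P D by (simp add: z_def)
  define x where "x = log 2 z / 2"
  have x0: "x \<ge> 0" using z1 by (simp add: x_def)
  define fl where "fl = \<lfloor>x\<rfloor>"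
  have fl0: "fl \<ge> 0" using x0 by (simp add: fl_def)
  define m where "m = nat fl"
  have mfl: "real m = of_int fl" using fl0 by (simp add: m_def)
  have kJe: "kJ = fl + 1" by (simp add: kJ_def fl_def x_def z_def)
  have nk: "nat kJ = m + 1" using fl0 by (simp add: kJe m_def nat_add_distrib)
  show "kJ \<ge> 1" using fl0 kJe by simp
  have fx: "of_int fl \<le> x" "x < of_int fl + 1" by (simp_all add: fl_def)
  have "4 * P / (7 * D) \<le> 4 * Lr / 7"
  proof -
    have "4 * P / (7 * D) \<le> 4 * (Lr * D) / (7 * D)" using PL D by (intro divide_right_mono) auto
    also have "\<dots> = 4 * Lr / 7" using D by simp
    finally show ?thesis .
  qed
  hence zL: "z \<le> 1 + 4 * Lr / 7" by (simp add: z_def)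
  define y where "y = log 2 (1 + 4 * Lr / 7) / 2"
  have "log 2 z \<le> log 2 (1 + 4 * Lr / 7)" using zL z1 by simp
  hence xy: "x \<le> y" by (simp add: x_def y_def)
  have "real_of_int fl \<le> real_of_int \<lceil>y\<rceil>" using xy fx(1) le_of_int_ceiling[of y] by linarith
  hence "fl \<le> \<lceil>y\<rceil>" by simp
  hence "m \<le> nat \<lceil>y\<rceil>" by (simp add: m_def nat_mono)
  thus "nat kJ \<le> ader_N Lr" using nk by (simp add: ader_N_def y_def)
  have zpos: "z > 0" using z1 by simp
  have pm: "(2::real) ^ (2 * m) = (2 ^ m)\<^sup>2"
    by (metis mult.commute power_mult)
  have p2: "(2::real) powr (real (2 * m)) = (2 ^ m)\<^sup>2"
  proof -
    have "(2::real) powr (real (2 * m)) = 2 ^ (2 * m)" by (rule powr_realpow) simp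
    thus ?thesis using pm by simp
  qed
  have p2s: "(2::real) powr (real (2 * (m + 1))) = 4 * (2 ^ m)\<^sup>2"
  proof -
    have "(2::real) powr (real (2 * (m + 1))) = 2 ^ (2 * (m + 1))" by (rule powr_realpow) simp
    also have "2 * (m + 1) = 2 * m + 2" by simp
    also have "(2::real) ^ (2 * m + 2) = 2 ^ (2 * m) * 2 ^ 2" by (rule power_add)
    finally show ?thesis using pm by simp
  qed
  have "real (2 * m) \<le> log 2 z" using fx(1) mfl by (simp add: x_def)
  hence "2 powr (real (2 * m)) \<le> z" using zpos by (simp add: le_log_iff)
  hence lo: "(2 ^ m)\<^sup>2 \<le> z" using p2 by simp
  have "log 2 z < real (2 * (m + 1))" using fx(2) mfl by (simp add: x_def)
  hence "z < 2 powr (real (2 * (m + 1)))" using zpos by (simp add: log_less_iff)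
  hence hi: "z < 4 * (2 ^ m)\<^sup>2" using p2s by simp
  have zQ: "z * (7 * D\<^sup>2) = 7 * D\<^sup>2 + 4 * D * P" using D by (simp add: z_def field_simps power2_eq_square)
  have D2: "7 * D\<^sup>2 > 0" using D by simp
  have "(2 ^ m)\<^sup>2 * (7 * D\<^sup>2) \<le> z * (7 * D\<^sup>2)" using lo D2 by (intro mult_right_mono) auto
  thus "7 * (2 ^ (nat kJ - 1))\<^sup>2 * D\<^sup>2 \<le> 7 * D\<^sup>2 + 4 * D * P" using zQ nk by (simp add: algebra_simps)
  have "z * (7 * D\<^sup>2) \<le> (4 * (2 ^ m)\<^sup>2) * (7 * D\<^sup>2)" using hi D2 by (intro mult_right_mono) auto
  thus "7 * D\<^sup>2 + 4 * D * P \<le> 28 * (2 ^ (nat kJ - 1))\<^sup>2 * D\<^sup>2" using zQ nk by (simp add: algebra_simps)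
qed


theorem lemma9:
  fixes Om :: "'a::euclidean_space set"
    and f :: "nat \<Rightarrow> 'a \<Rightarrow> real" and g :: "nat \<Rightarrow> 'a \<Rightarrow> 'a"
    and D G :: real and X0 :: "nat \<times> nat \<Rightarrow> nat \<Rightarrow> 'a"
    and J :: "nat \<times> nat" and u :: "nat \<Rightarrow> 'a"
  assumes "convex Om" and "closed Om"
    and "0 \<in> Om" and "D > 0" and "G > 0"
    and "\<forall>x\<in>Om. \<forall>y\<in>Om. norm (x - y) \<le> D"
    and "\<forall>t\<ge>1. convex_on Om (f t)"
    and "\<forall>t\<ge>1. \<forall>w\<in>Om. (f t has_derivative (\<lambda>h. g t w \<bullet> h)) (at w within Om)"
    and "\<forall>t\<ge>1. \<forall>w\<in>Om. norm (g t w) \<le> G"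
    and "\<forall>t\<ge>1. \<forall>w\<in>Om. 0 \<le> f t w \<and> f t w \<le> 1"
    and "\<forall>J' m. X0 J' m \<in> Om"
    and "J \<in> covering"
    and "\<forall>t\<in>{int_start J..int_end J + 1}. u t \<in> Om"
  shows "let i = int_start J; j = int_end J; L = real (int_len J);
             P = (\<Sum>t=i..j. norm (u (t + 1) - u t));
             kJ = \<lfloor>log 2 (1 + 4 * P / (7 * D)) / 2\<rfloor> + 1;
             c' = 1 + ln (real j) + ln (1 + log 2 (real j)) + ln ((5 + 3 * ln (1 + real j)) / 2)
         in (\<Sum>t=i..j. f t (aoa Om g f D G X0 t)) - (\<Sum>t=i..j. f t (u t))
            \<le> sqrt (3 * L * c') + 3 * G / 4 * sqrt (2 * L * (7 * D\<^sup>2 + 4 * D * P))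
               + sqrt (2 * L) / 4 * (1 + 2 * ln (real_of_int kJ + 1))"
proof -
  note cvx = assms(1) and cl = assms(2) and O0 = assms(3) and D0 = assms(4) and G0 = assms(5)
    and diam = assms(6) and cF = assms(7) and der = assms(8) and gG = assms(9) and fb = assms(10)
    and X0in = assms(11) and J = assms(12) and uin = assms(13)
  define i where "i = int_start J"
  define j where "j = int_end J"
  define L where "L = int_len J"
  define P where "P = (\<Sum>t=i..j. norm (u (t + 1) - u t))"
  define kJ where "kJ = \<lfloor>log 2 (1 + 4 * P / (7 * D)) / 2\<rfloor> + 1"
  define c' where "c' = 1 + ln (real j) + ln (1 + log 2 (real j)) + ln ((5 + 3 * ln (1 + real j)) / 2)"
  define W where "W = aoa Om g f D G X0"
  define E where "E = expert_out Om g f D G X0"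
  define k where "k = nat kJ"
  obtain k0 i0 where Jk: "J = (k0, i0)" by (cases J)
  have i01: "i0 \<ge> 1" using J Jk by (simp add: covering_def)
  have jL: "j + 1 = i + L" using Jk by (simp add: i_def j_def L_def int_start_def int_end_def int_len_def algebra_simps)
  have i1: "i \<ge> 1" using start_ge1[OF J] by (simp add: i_def)
  have L1: "L \<ge> 1" using Jk by (simp add: L_def int_len_def)
  have Ein: "\<forall>t K. E t K \<in> Om"
    unfolding E_def expert_out_def using ader_out_in[OF cvx cl] X0in by blast
  have Wrec: "\<forall>t\<ge>1. W t = aoa_play f E W t" unfolding W_def E_def using aoa_rec by blast
  have meta: "(\<Sum>t=i..j. f t (W t) - f t (E t J)) \<le> sqrt (3 * real L * c')"
    using meta_regret[OF cvx O0 cF fb Ein Wrec J] by (simp add: i_def j_def L_def c'_def)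
  have uin': "\<forall>n\<le>L. u (i + n) \<in> Om"
  proof (intro allI impI)
    fix n assume n: "n \<le> L"
    have "i + n \<in> {int_start J..int_end J + 1}" using jL n by (simp add: i_def j_def)
    thus "u (i + n) \<in> Om" using uin by blast
  qed
  have P': "P = (\<Sum>n<L. norm (u (i + n + 1) - u (i + n)))"
    unfolding P_def by (rule sum_reindex_int2[OF jL])
  have P0: "P \<ge> 0" unfolding P_def by (intro sum_nonneg) auto
  have PL: "P \<le> real L * D"
  proof -
    have "P \<le> (\<Sum>n<L. D)" unfolding P'
    proof (intro sum_mono)
      fix n assume n: "n \<in> {..<L}"
      have "u (i + n + 1) \<in> Om" using uin' n by (metis Suc_leI add_Suc_right lessThan_iff Suc_eq_plus1)
      moreover have "u (i + n) \<in> Om" using uin' n by simp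
      ultimately show "norm (u (i + n + 1) - u (i + n)) \<le> D" using diam by blast
    qed
    thus ?thesis by simp
  qed
  have kf1: "kJ \<ge> 1" and kN: "k \<le> ader_N (real L)"
    and kq1: "7 * (2 ^ (k - 1))\<^sup>2 * D\<^sup>2 \<le> 7 * D\<^sup>2 + 4 * D * P"
    and kq2: "7 * D\<^sup>2 + 4 * D * P \<le> 28 * (2 ^ (k - 1))\<^sup>2 * D\<^sup>2"
    using k_facts[OF D0 P0 PL] unfolding k_def kJ_def by auto
  have k1: "k \<ge> 1" using kf1 by (simp add: k_def)
  have kre: "real_of_int kJ = real k" using kf1 by (simp add: k_def)
  define eta where "eta = ader_eta D G (real L) k"
  define xk where "xk = (\<lambda>n. ogd Om g eta (X0 J k) i n)"
  have Eat: "E (i + n) J = ader_out Om g f D G (real L) (X0 J) i n" for n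
    by (simp add: E_def expert_out_def i_def L_def)
  have ader: "(\<Sum>n<L. f (i+n) (E (i+n) J)) - (\<Sum>n<L. f (i+n) (xk n))
      \<le> sqrt (2 * real L) / 4 * (1 + 2 * ln (real k + 1))"
  proof -
    have X0J: "\<forall>m. X0 J m \<in> Om" using X0in by blast
    show ?thesis unfolding Eat xk_def eta_def by (rule ader_regret[OF cvx cl X0J i1 cF fb]) (use L1 k1 kN in auto)
  qed
  have etap: "eta > 0" using D0 G0 L1 by (simp add: eta_def ader_eta_def)
  have ogd: "(\<Sum>n<L. f (i+n) (xk n) - f (i+n) (u (i+n)))
      \<le> (D\<^sup>2 + 2 * D * P) / (2*eta) + eta * G\<^sup>2 * real L / 2"
  proof -
    have X0Jk: "X0 J k \<in> Om" using X0in by blast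
    show ?thesis unfolding xk_def P' by (rule ogd_regret[OF cvx cl etap X0Jk i1 cF der gG diam _ uin']) (use D0 in auto)
  qed
  define Q where "Q = 7 * D\<^sup>2 + 4 * D * P"
  have Qp: "Q > 0" using D0 P0 by (simp add: Q_def add_pos_nonneg)
  have step: "(D\<^sup>2 + 2 * D * P) / (2*eta) + eta * G\<^sup>2 * real L / 2 \<le> 3 * G / 4 * sqrt (2 * real L * Q)"
  proof -
    define A where "A = Q / 4"
    define B where "B = G\<^sup>2 * real L / 2"
    define cc where "cc = (2::real) ^ (k - 1)"
    have Ap: "A > 0" using Qp by (simp add: A_def)
    have Bp: "B > 0" using G0 L1 by (simp add: B_def)
    have sq: "(sqrt (7 / (2 * real L)))\<^sup>2 = 7 / (2 * real L)" using L1 by simp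
    have e2: "eta\<^sup>2 = cc\<^sup>2 * D\<^sup>2 / G\<^sup>2 * (7 / (2 * real L))"
      unfolding eta_def ader_eta_def cc_def using sq by (simp add: power_mult_distrib power_divide)
    have Be: "B * eta\<^sup>2 = 7 * cc\<^sup>2 * D\<^sup>2 / 4"
      unfolding e2 B_def using G0 L1 by (simp add: field_simps power2_eq_square)
    have l1: "B * eta\<^sup>2 \<le> A" unfolding Be A_def using kq1 by (simp add: Q_def cc_def mult_ac)
    have l2: "A \<le> 4 * B * eta\<^sup>2"
    proof -
      have "4 * B * eta\<^sup>2 = 4 * (B * eta\<^sup>2)" by simp
      thus ?thesis unfolding A_def Be using kq2 by (simp add: Q_def cc_def mult_ac)
    qed
    have "(D\<^sup>2 + 2 * D * P) / (2*eta) \<le> A / eta"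
    proof -
      have "(D\<^sup>2 + 2 * D * P) / 2 \<le> A" unfolding A_def Q_def using D0 by (simp add: power2_eq_square)
      hence "((D\<^sup>2 + 2 * D * P) / 2) / eta \<le> A / eta" using etap by (intro divide_right_mono) auto
      thus ?thesis by simp
    qed
    moreover have "eta * G\<^sup>2 * real L / 2 = B * eta" by (simp add: B_def)
    moreover have "A / eta + B * eta \<le> 3 * sqrt (A * B)" by (rule eta_bound[OF Ap Bp etap l1 l2])
    moreover have "sqrt (A * B) = G / 4 * sqrt (2 * real L * Q)"
    proof -
      have "A * B = (G / 4)\<^sup>2 * (2 * real L * Q)" by (simp add: A_def B_def power2_eq_square)
      hence "sqrt (A * B) = sqrt ((G / 4)\<^sup>2) * sqrt (2 * real L * Q)" by (simp add: real_sqrt_mult)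
      thus ?thesis using G0 by simp
    qed
    hence "3 * sqrt (A * B) = 3 * G / 4 * sqrt (2 * real L * Q)" by simp
    ultimately show ?thesis by linarith
  qed
  have "(\<Sum>t=i..j. f t (W t)) - (\<Sum>t=i..j. f t (u t))
      = (\<Sum>t=i..j. f t (W t) - f t (E t J))
        + ((\<Sum>n<L. f (i+n) (E (i+n) J)) - (\<Sum>n<L. f (i+n) (xk n)))
        + (\<Sum>n<L. f (i+n) (xk n) - f (i+n) (u (i+n)))"
    unfolding sum_reindex_int2[OF jL] by (simp add: sum_subtractf)
  also have "\<dots> \<le> sqrt (3 * real L * c') + sqrt (2 * real L) / 4 * (1 + 2 * ln (real k + 1))
        + 3 * G / 4 * sqrt (2 * real L * Q)"
    using meta ader ogd step by linarith
  finally have main: "(\<Sum>t=i..j. f t (W t)) - (\<Sum>t=i..j. f t (u t))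
      \<le> sqrt (3 * real L * c') + 3 * G / 4 * sqrt (2 * real L * (7 * D\<^sup>2 + 4 * D * P))
         + sqrt (2 * real L) / 4 * (1 + 2 * ln (real_of_int kJ + 1))"
    unfolding kre Q_def by linarith
  show ?thesis unfolding Let_def i_def[symmetric] j_def[symmetric] L_def[symmetric]
      P_def[symmetric] kJ_def[symmetric] c'_def[symmetric] W_def[symmetric]
    by (rule main)
qed


end
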